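(* Let $d\ge2$, $k\in\mathbb N$, $p\in[0,1]$, and let $\{X_e:e\in\mathcal E^d\}$ be Bernoulli$(p)$ random variables (identically distributed marginally, with joint law $\mathbb P_p$) such that each $X_e$ is independent of $\{X_{\tilde e}:|v_e-v_{\tilde e}|_\infty\ge k\}$. Let $N_n=\max_{\gamma\in\Xi_n}\sum_{e\in\gamma}X_e$. There exist constants $C_1,C_2,C_3,C_4>0$ depending only on $d$ and $k$ such that: (i) for all $p\in[0,1]$ and all $n\in\mathbb N$, $\mathbb E_pN_n\le C_1p^{1/d}n$; (ii) for each $p\in(0,1]$, $\mathbb E_p\big[\sup_{n\ge\lceil p^{-2/d}\rceil}\frac{N_n}{n}\big]\le C_1p^{1/d}$; (iii) for each $p\in(0,1)$ and all $s>C_2$, $\mathbb P_p\big(\sup_{n\ge\lceil p^{-2/d}\rceil}\frac{N_n}{n}>sp^{1/d}\big)\le C_3e^{-C_4s}$.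
   Context: $\mathcal E^d$ is the set of nearest-neighbor edges of $\mathbb Z^d$. For $e=\{a,b\}$, $v_e$ is the endpoint of $e$ with smaller $\ell^1$ norm. $\Xi_n$ is the set of all vertex self-avoiding nearest-neighbor paths starting at $0$ with $n$ edges. *)

theory Defs
  imports "HOL-Probability.Probability"
begin

text \<open>Vertices of Z^d are functions 'd => int for a finite index type 'd, d = CARD('d).
  Edges are two-element vertex sets.\<close>

type_synonym 'd vertex = "'d \<Rightarrow> int"
type_synonym 'd edge = "'d vertex set"

definition l1norm :: "('d::finite) vertex \<Rightarrow> int" where
  "l1norm a = (\<Sum>i\<in>UNIV. \<bar>a i\<bar>)"

definition linfnorm :: "('d::finite) vertex \<Rightarrow> int" where
  "linfnorm a = Max ((\<lambda>i. \<bar>a i\<bar>) ` UNIV)"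

definition nn_edges :: "('d::finite) edge set" where
  "nn_edges = {{a, b} | a b. l1norm (\<lambda>i. a i - b i) = 1}"

definition vtx :: "('d::finite) edge \<Rightarrow> 'd vertex" where
  "vtx e = (THE a. a \<in> e \<and> (\<forall>b\<in>e. l1norm a \<le> l1norm b))"

definition SAW :: "nat \<Rightarrow> ('d::finite) vertex list set" where
  "SAW n = {\<gamma>. length \<gamma> = n + 1 \<and> distinct \<gamma> \<and> \<gamma> ! 0 = (\<lambda>_. 0) \<and>
                 (\<forall>i<n. l1norm (\<lambda>j. (\<gamma> ! i) j - (\<gamma> ! Suc i) j) = 1)}"

definition path_edges :: "('d::finite) vertex list \<Rightarrow> 'd edge set" where
  "path_edges \<gamma> = {{\<gamma> ! i, \<gamma> ! Suc i} | i. Suc i < length \<gamma>}"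

definition Nmax :: "(('d::finite) edge \<Rightarrow> 'w \<Rightarrow> bool) \<Rightarrow> nat \<Rightarrow> 'w \<Rightarrow> real" where
  "Nmax X n \<omega> = Max ((\<lambda>\<gamma>. \<Sum>e\<in>path_edges \<gamma>. of_bool (X e \<omega>)) ` (SAW n :: 'd vertex list set))"

definition far_edges :: "nat \<Rightarrow> ('d::finite) edge \<Rightarrow> 'd edge set" where
  "far_edges k e = {e' \<in> nn_edges. linfnorm (\<lambda>j. vtx e j - vtx e' j) \<ge> int k}"

end

theory Submission
  imports Defs
begin

definition dist1 :: "('d::finite) vertex \<Rightarrow> 'd vertex \<Rightarrow> nat" where
  "dist1 a b = nat (l1norm (\<lambda>i. a i - b i))"

fun wlen :: "('d::finite) vertex \<Rightarrow> 'd vertex list \<Rightarrow> nat" where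
  "wlen v0 [] = 0"
| "wlen v0 (v # vs) = dist1 v v0 + wlen v vs"

definition walks :: "('d::finite) vertex \<Rightarrow> nat \<Rightarrow> nat \<Rightarrow> 'd vertex list set" where
  "walks v0 j R = {vs. length vs = j \<and> wlen v0 vs \<le> R}"

definition lbox :: "nat \<Rightarrow> ('d::finite) vertex set" where
  "lbox r = {v. \<forall>i. \<bar>v i\<bar> \<le> int r}"

lemma l1norm_nonneg: "l1norm a \<ge> 0"
  unfolding l1norm_def by (simp add: sum_nonneg)

lemma l1norm_triangle:
  "l1norm (\<lambda>i. a i - c i) \<le> l1norm (\<lambda>i. a i - b i) + l1norm (\<lambda>i. b i - c i)"
  unfolding l1norm_def sum.distrib[symmetric] by (rule sum_mono) linarith

lemma l1norm_sym: "l1norm (\<lambda>i. a i - b i) = l1norm (\<lambda>i. b i - a i)"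
  unfolding l1norm_def by (simp add: abs_minus_commute)

lemma dist1_sym: "dist1 a b = dist1 b a"
  unfolding dist1_def using l1norm_sym by metis

lemma dist1_triangle: "dist1 a c \<le> dist1 a b + dist1 b c"
  unfolding dist1_def using l1norm_triangle[of a c b] l1norm_nonneg
  by (simp add: nat_add_distrib[symmetric] nat_mono)

lemma lbox_PiE: "lbox r = PiE UNIV (\<lambda>_. {-int r..int r})"
  unfolding lbox_def PiE_UNIV_domain Pi_def by (fastforce simp: abs_le_iff minus_le_iff)

lemma finite_lbox: "finite (lbox r)"
  unfolding lbox_PiE by (rule finite_PiE) auto

lemma card_lbox: "card (lbox r :: ('d::finite) vertex set) = (2 * r + 1) ^ CARD('d)"
  unfolding lbox_PiE by (simp add: card_PiE nat_add_distrib nat_mult_distrib)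

lemma abs_le_l1norm: "\<bar>w i\<bar> \<le> l1norm w"
  unfolding l1norm_def by (rule member_le_sum) auto

lemma dist1_lbox: assumes "dist1 v v0 \<le> R" shows "(\<lambda>i. v i - v0 i) \<in> lbox R"
proof -
  have h: "l1norm (\<lambda>i. v i - v0 i) \<le> int R" using assms unfolding dist1_def by (simp add: nat_le_iff)
  show ?thesis unfolding lbox_def
  proof (intro CollectI allI)
    fix i show "\<bar>v i - v0 i\<bar> \<le> int R"
      using abs_le_l1norm[of "\<lambda>i. v i - v0 i" i] h by simp
  qed
qed

lemma ball_sub: "{v. dist1 v v0 \<le> R} \<subseteq> (\<lambda>w i. w i + v0 i) ` lbox R"
proof
  fix v assume "v \<in> {v. dist1 v v0 \<le> R}"
  then have "(\<lambda>i. v i - v0 i) \<in> lbox R" using dist1_lbox by auto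
  then show "v \<in> (\<lambda>w i. w i + v0 i) ` lbox R" by (intro image_eqI[where x="\<lambda>i. v i - v0 i"]) auto
qed

lemma finite_ball: "finite {v. dist1 v v0 \<le> R}"
  by (rule finite_subset[OF ball_sub]) (simp add: finite_lbox)

lemma nat_l1norm: "nat (l1norm w) = (\<Sum>i\<in>UNIV. nat \<bar>w i\<bar>)"
proof -
  have "l1norm w = (\<Sum>i\<in>UNIV. int (nat \<bar>w i\<bar>))" unfolding l1norm_def by simp
  also have "\<dots> = int (\<Sum>i\<in>UNIV. nat \<bar>w i\<bar>)" by (simp only: of_nat_sum)
  finally show ?thesis by (simp only: nat_int)
qed

lemma geom_le: fixes x :: real assumes "0 \<le> x" "x < 1"
  shows "(\<Sum>m\<in>{0..R}. x ^ m) \<le> 1 / (1 - x)"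
proof -
  have "(\<Sum>m\<in>{0..R}. x ^ m) = (\<Sum>m<Suc R. x ^ m)" by (rule sum.cong) auto
  also have "\<dots> = (1 - x ^ Suc R) / (1 - x)"
    using assms by (simp only: sum_gp_strict if_not_P[of "x = 1"])
  also have "\<dots> \<le> 1 / (1 - x)" using assms by (intro divide_right_mono) auto
  finally show ?thesis .
qed

lemma sum_interval_le: fixes x :: real assumes "0 \<le> x" "x < 1"
  shows "(\<Sum>a\<in>{-int R..int R}. x ^ nat \<bar>a\<bar>) \<le> 2 / (1 - x)"
proof -
  let ?g = "\<lambda>a::int. x ^ nat \<bar>a\<bar>"
  have U: "{-int R..int R} = {-int R..0} \<union> {0..int R}" by auto
  have "sum ?g ({-int R..0} \<union> {0..int R}) + sum ?g ({-int R..0} \<inter> {0..int R})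
        = sum ?g {-int R..0} + sum ?g {0..int R}"
    by (rule sum.union_inter) auto
  moreover have "sum ?g ({-int R..0} \<inter> {0..int R}) \<ge> 0" using assms by (intro sum_nonneg) auto
  ultimately have 1: "sum ?g {-int R..int R} \<le> sum ?g {-int R..0} + sum ?g {0..int R}"
    unfolding U by linarith
  have 2: "sum ?g {0..int R} = (\<Sum>m\<in>{0..R}. x ^ m)"
  proof -
    have "sum ?g {0..int R} = sum ?g (int ` {0..R})" by (simp add: image_int_atLeastAtMost)
    also have "\<dots> = sum (?g \<circ> int) {0..R}" by (rule sum.reindex) auto
    finally show ?thesis by simp
  qed
  have 3: "sum ?g {-int R..0} = sum ?g {0..int R}"
  proof -
    show ?thesis by (rule sum.reindex_bij_witness[of _ uminus uminus]) auto
  qed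
  show ?thesis using 1 2 3 geom_le[OF assms, of R] by simp
qed

lemma sum_lbox_le: fixes x :: real assumes "0 \<le> x" "x < 1"
  shows "(\<Sum>w\<in>(lbox R :: ('d::finite) vertex set). x ^ nat (l1norm w)) \<le> (2 / (1 - x)) ^ CARD('d)"
proof -
  have "(\<Sum>w\<in>(lbox R :: 'd vertex set). x ^ nat (l1norm w))
      = (\<Sum>w\<in>PiE (UNIV::'d set) (\<lambda>_. {-int R..int R}). \<Prod>i\<in>UNIV. x ^ nat \<bar>w i\<bar>)"
    unfolding lbox_PiE nat_l1norm power_sum by simp
  also have "\<dots> = (\<Prod>i\<in>(UNIV::'d set). \<Sum>a\<in>{-int R..int R}. x ^ nat \<bar>a\<bar>)"
    by (rule prod_sum_PiE[symmetric]) auto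
  also have "\<dots> = (\<Sum>a\<in>{-int R..int R}. x ^ nat \<bar>a\<bar>) ^ CARD('d)" by simp
  also have "\<dots> \<le> (2 / (1 - x)) ^ CARD('d)"
    using assms by (intro power_mono sum_interval_le sum_nonneg) auto
  finally show ?thesis .
qed

lemma sum_ball_le: fixes x :: real assumes "0 \<le> x" "x < 1"
  shows "(\<Sum>v\<in>{v. dist1 v v0 \<le> R}. x ^ dist1 v (v0::('d::finite) vertex)) \<le> (2 / (1 - x)) ^ CARD('d)"
proof -
  let ?T = "\<lambda>w i. w i + v0 i"
  have "(\<Sum>v\<in>{v. dist1 v v0 \<le> R}. x ^ dist1 v v0) \<le> (\<Sum>v\<in>?T ` lbox R. x ^ dist1 v v0)"
    using assms by (intro sum_mono2 ball_sub finite_imageI finite_lbox) auto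
  also have "\<dots> = (\<Sum>w\<in>lbox R. x ^ dist1 (?T w) v0)"
  proof (rule sum.reindex[unfolded comp_def])
    show "inj_on ?T (lbox R)" by (rule inj_onI) (simp add: fun_eq_iff)
  qed
  also have "\<dots> = (\<Sum>w\<in>(lbox R :: 'd vertex set). x ^ nat (l1norm w))" by (simp add: dist1_def)
  also have "\<dots> \<le> (2 / (1 - x)) ^ CARD('d)" by (rule sum_lbox_le[OF assms])
  finally show ?thesis .
qed


lemma walks_0: "walks v0 0 R = {[]}"
  unfolding walks_def by auto

lemma walks_Suc: "walks v0 (Suc j) R =
  (\<lambda>(v, vs). v # vs) ` (SIGMA v:{v. dist1 v v0 \<le> R}. walks v j (R - dist1 v v0))"
proof (rule set_eqI)
  fix ws show "ws \<in> walks v0 (Suc j) R \<longleftrightarrow>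
    ws \<in> (\<lambda>(v, vs). v # vs) ` (SIGMA v:{v. dist1 v v0 \<le> R}. walks v j (R - dist1 v v0))"
  proof
    assume "ws \<in> walks v0 (Suc j) R"
    then obtain v vs where ws: "ws = v # vs" and l: "length vs = j" and w: "dist1 v v0 + wlen v vs \<le> R"
      unfolding walks_def by (cases ws) auto
    then have "(v, vs) \<in> (SIGMA v:{v. dist1 v v0 \<le> R}. walks v j (R - dist1 v v0))"
      unfolding walks_def by auto
    then show "ws \<in> (\<lambda>(v, vs). v # vs) ` (SIGMA v:{v. dist1 v v0 \<le> R}. walks v j (R - dist1 v v0))"
      using ws by (intro image_eqI[where x="(v, vs)"]) auto
  next
    assume "ws \<in> (\<lambda>(v, vs). v # vs) ` (SIGMA v:{v. dist1 v v0 \<le> R}. walks v j (R - dist1 v v0))"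
    then show "ws \<in> walks v0 (Suc j) R" unfolding walks_def by auto
  qed
qed

lemma card_walks:
  fixes x :: real assumes x: "0 < x" "x < 1"
  shows "finite (walks (v0::('d::finite) vertex) j R) \<and>
     real (card (walks v0 j R)) \<le> (1 / x) ^ R * ((2 / (1 - x)) ^ CARD('d)) ^ j"
proof (induction j arbitrary: v0 R)
  case 0
  have "1 \<le> (1 / x) ^ R" using x by (intro one_le_power) simp
  then show ?case by (simp add: walks_0)
next
  case (Suc j)
  let ?K = "(2 / (1 - x)) ^ CARD('d)"
  let ?B = "{v. dist1 v v0 \<le> R}"
  let ?S = "SIGMA v:?B. walks v j (R - dist1 v v0)"
  have fB: "finite ?B" by (rule finite_ball)
  have fS: "finite ?S" using fB Suc.IH by (intro finite_SigmaI) auto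
  have "real (card (walks v0 (Suc j) R)) \<le> real (card ?S)"
    unfolding walks_Suc by (intro of_nat_mono card_image_le fS)
  also have "\<dots> = (\<Sum>v\<in>?B. real (card (walks v j (R - dist1 v v0))))"
    using fB Suc.IH by (simp add: card_SigmaI)
  also have "\<dots> \<le> (\<Sum>v\<in>?B. (1 / x) ^ (R - dist1 v v0) * ?K ^ j)"
    using Suc.IH by (intro sum_mono) auto
  also have "\<dots> = (\<Sum>v\<in>?B. ((1 / x) ^ R * ?K ^ j) * x ^ dist1 v v0)"
  proof (rule sum.cong[OF refl])
    fix v assume "v \<in> ?B"
    then have "R = (R - dist1 v v0) + dist1 v v0" by simp
    then have "(1 / x) ^ R = (1 / x) ^ (R - dist1 v v0) * (1 / x) ^ dist1 v v0"
      by (metis power_add)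
    then have "(1 / x) ^ R * x ^ dist1 v v0 = (1 / x) ^ (R - dist1 v v0)"
      using x by (simp add: power_one_over field_simps)
    then show "(1 / x) ^ (R - dist1 v v0) * ?K ^ j = ((1 / x) ^ R * ?K ^ j) * x ^ dist1 v v0"
      by (simp add: algebra_simps)
  qed
  also have "\<dots> = ((1 / x) ^ R * ?K ^ j) * (\<Sum>v\<in>?B. x ^ dist1 v v0)"
    by (simp add: sum_distrib_left)
  also have "\<dots> \<le> ((1 / x) ^ R * ?K ^ j) * ?K"
    using x by (intro mult_left_mono sum_ball_le) auto
  finally have "real (card (walks v0 (Suc j) R)) \<le> (1 / x) ^ R * ?K ^ Suc j" by (simp add: algebra_simps)
  moreover have "finite (walks v0 (Suc j) R)" unfolding walks_Suc using fS by (rule finite_imageI)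
  ultimately show ?case by simp
qed


definition Dirs :: "('d::finite) vertex set" where
  "Dirs = {u. l1norm u = 1}"

definition mk :: "('d::finite) vertex list \<Rightarrow> 'd vertex list \<Rightarrow> 'd edge set" where
  "mk vs us = set (map (\<lambda>(v, u). {v, \<lambda>i. v i + u i}) (zip vs us))"

definition Gset :: "nat \<Rightarrow> nat \<Rightarrow> (('d::finite) vertex list \<times> 'd vertex list) set" where
  "Gset n j = walks (\<lambda>_. 0) j n \<times> {us. set us \<subseteq> Dirs \<and> length us = j}"

lemma Dirs_sub: "(Dirs :: ('d::finite) vertex set) \<subseteq> lbox 1"
proof
  fix u :: "'d vertex" assume "u \<in> Dirs"
  then have "l1norm u = 1" unfolding Dirs_def by simp
  then show "u \<in> lbox 1" unfolding lbox_def using abs_le_l1norm[of u] by simp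
qed

lemma finite_Dirs: "finite Dirs"
  by (rule finite_subset[OF Dirs_sub finite_lbox])

lemma card_Dirs: "card (Dirs :: ('d::finite) vertex set) \<le> 3 ^ CARD('d)"
proof -
  have "card (Dirs :: 'd vertex set) \<le> card (lbox 1 :: 'd vertex set)"
    by (rule card_mono[OF finite_lbox Dirs_sub])
  then show ?thesis by (simp add: card_lbox)
qed

lemma card_Gset:
  fixes x :: real assumes x: "0 < x" "x < 1"
  shows "finite (Gset n j :: (('d::finite) vertex list \<times> 'd vertex list) set) \<and>
    real (card (Gset n j :: ('d vertex list \<times> 'd vertex list) set))
      \<le> (1 / x) ^ n * ((2 / (1 - x)) ^ CARD('d) * 3 ^ CARD('d)) ^ j"
proof -
  have w: "finite (walks (\<lambda>_. 0::int) j n :: 'd vertex list set)"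
     "real (card (walks (\<lambda>_. 0::int) j n :: 'd vertex list set)) \<le> (1 / x) ^ n * ((2 / (1 - x)) ^ CARD('d)) ^ j"
    using card_walks[OF x] by auto
  have fl: "finite {us. set us \<subseteq> (Dirs :: 'd vertex set) \<and> length us = j}"
    by (rule finite_lists_length_eq[OF finite_Dirs])
  have cl: "real (card {us. set us \<subseteq> (Dirs :: 'd vertex set) \<and> length us = j}) \<le> (3 ^ CARD('d)) ^ j"
  proof -
    have "card (Dirs :: 'd vertex set) ^ j \<le> (3 ^ CARD('d)) ^ j"
      by (rule power_mono[OF card_Dirs]) simp
    then have "real (card (Dirs :: 'd vertex set) ^ j) \<le> real ((3 ^ CARD('d)) ^ j)"
      by (rule of_nat_mono)
    then show ?thesis unfolding card_lists_length_eq[OF finite_Dirs] by simp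
  qed
  have "real (card (Gset n j :: ('d vertex list \<times> 'd vertex list) set))
     = real (card (walks (\<lambda>_. 0::int) j n :: 'd vertex list set)) * real (card {us. set us \<subseteq> (Dirs :: 'd vertex set) \<and> length us = j})"
    unfolding Gset_def card_cartesian_product by simp
  also have "\<dots> \<le> ((1 / x) ^ n * ((2 / (1 - x)) ^ CARD('d)) ^ j) * (3 ^ CARD('d)) ^ j"
    using w cl x by (intro mult_mono) auto
  also have "\<dots> = (1 / x) ^ n * ((2 / (1 - x)) ^ CARD('d) * 3 ^ CARD('d)) ^ j"
    by (simp add: power_mult_distrib)
  finally show ?thesis using w fl unfolding Gset_def by simp
qed

lemma SAW_step: "\<gamma> \<in> SAW n \<Longrightarrow> i < n \<Longrightarrow> dist1 (\<gamma> ! Suc i) (\<gamma> ! i) = 1"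
proof -
  assume a: "\<gamma> \<in> SAW n" "i < n"
  then have "l1norm (\<lambda>j. (\<gamma> ! i) j - (\<gamma> ! Suc i) j) = 1" unfolding SAW_def by auto
  then have "l1norm (\<lambda>j. (\<gamma> ! Suc i) j - (\<gamma> ! i) j) = 1" by (simp add: l1norm_sym)
  then show ?thesis unfolding dist1_def by simp
qed

lemma SAW_dist: assumes "\<gamma> \<in> SAW n" shows "a \<le> i \<Longrightarrow> i \<le> n \<Longrightarrow> dist1 (\<gamma> ! i) (\<gamma> ! a) \<le> i - a"
proof (induction i)
  case 0 then show ?case by (simp add: dist1_def l1norm_def)
next
  case (Suc i)
  show ?case
  proof (cases "a = Suc i")
    case True then show ?thesis by (simp add: dist1_def l1norm_def)
  next
    case False
    then have "a \<le> i" using Suc by simp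
    then have "dist1 (\<gamma> ! i) (\<gamma> ! a) \<le> i - a" using Suc by simp
    moreover have "dist1 (\<gamma> ! Suc i) (\<gamma> ! i) = 1" using SAW_step[OF assms] Suc by simp
    moreover have "dist1 (\<gamma> ! Suc i) (\<gamma> ! a) \<le> dist1 (\<gamma> ! Suc i) (\<gamma> ! i) + dist1 (\<gamma> ! i) (\<gamma> ! a)"
      by (rule dist1_triangle)
    ultimately show ?thesis using \<open>a \<le> i\<close> by simp
  qed
qed

lemma SAW_wlen: assumes "\<gamma> \<in> SAW n"
  shows "sorted L \<Longrightarrow> (\<forall>i\<in>set L. a \<le> i \<and> i \<le> n) \<Longrightarrow> a \<le> n \<Longrightarrow> wlen (\<gamma> ! a) (map ((!) \<gamma>) L) \<le> n - a"
proof (induction L arbitrary: a)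
  case Nil then show ?case by simp
next
  case (Cons i L)
  have 1: "dist1 (\<gamma> ! i) (\<gamma> ! a) \<le> i - a" using SAW_dist[OF assms] Cons.prems by simp
  have 2: "wlen (\<gamma> ! i) (map ((!) \<gamma>) L) \<le> n - i" using Cons by auto
  have "a \<le> i" "i \<le> n" using Cons.prems by auto
  then show ?case using 1 2 by simp
qed

lemma SAW_length: "\<gamma> \<in> SAW n \<Longrightarrow> length \<gamma> = Suc n"
  unfolding SAW_def by simp

lemma SAW_0: "\<gamma> \<in> SAW n \<Longrightarrow> \<gamma> ! 0 = (\<lambda>_. 0)"
  unfolding SAW_def by simp

lemma path_edges_SAW: "\<gamma> \<in> SAW n \<Longrightarrow> path_edges \<gamma> = (\<lambda>i. {\<gamma> ! i, \<gamma> ! Suc i}) ` {..<n}"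
proof -
  assume "\<gamma> \<in> SAW n"
  then have len: "length \<gamma> = Suc n" by (rule SAW_length)
  show ?thesis unfolding path_edges_def
  proof (rule set_eqI)
    fix e show "e \<in> {{\<gamma> ! i, \<gamma> ! Suc i} |i. Suc i < length \<gamma>} \<longleftrightarrow> e \<in> (\<lambda>i. {\<gamma> ! i, \<gamma> ! Suc i}) ` {..<n}"
      using len by auto
  qed
qed

lemma path_edges_nn: assumes "\<gamma> \<in> SAW n" shows "path_edges \<gamma> \<subseteq> nn_edges"
proof
  fix e assume "e \<in> path_edges \<gamma>"
  then obtain i where i: "i < n" "e = {\<gamma> ! i, \<gamma> ! Suc i}" using path_edges_SAW[OF assms] by auto
  have "l1norm (\<lambda>j. (\<gamma> ! i) j - (\<gamma> ! Suc i) j) = 1" using assms i unfolding SAW_def by auto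
  then show "e \<in> nn_edges" unfolding nn_edges_def using i by auto
qed

lemma path_to_G: assumes "\<gamma> \<in> SAW n" "S \<subseteq> path_edges \<gamma>"
  shows "\<exists>g\<in>Gset n (card S). mk (fst g) (snd g) = S"
proof -
  let ?ed = "\<lambda>i. {\<gamma> ! i, \<gamma> ! Suc i}"
  obtain P where P: "P \<subseteq> {..<n}" "inj_on ?ed P" "S = ?ed ` P"
    using assms(2) unfolding path_edges_SAW[OF assms(1)] subset_image_inj by blast
  have fP: "finite P" by (rule finite_subset[OF P(1)]) simp
  have cS: "card S = card P" unfolding P(3) by (rule card_image[OF P(2)])
  define L where "L = sorted_list_of_set P"
  have L: "set L = P" "sorted L" "length L = card P" unfolding L_def using fP by auto
  define vs where "vs = map ((!) \<gamma>) L"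
  define us where "us = map (\<lambda>i. \<lambda>j. (\<gamma> ! Suc i) j - (\<gamma> ! i) j) L"
  have "mk vs us = set (map (\<lambda>i. {\<gamma> ! i, \<lambda>j. (\<gamma> ! i) j + ((\<gamma> ! Suc i) j - (\<gamma> ! i) j)}) L)"
    unfolding mk_def vs_def us_def zip_map_map zip_same_conv_map by (simp add: comp_def)
  also have "\<dots> = ?ed ` P" using L by simp
  finally have mk: "mk vs us = S" using P by simp
  have "wlen (\<gamma> ! 0) (map ((!) \<gamma>) L) \<le> n - 0"
    using L P by (intro SAW_wlen[OF assms(1)]) auto
  then have vsw: "vs \<in> walks (\<lambda>_. 0) (card S) n"
    unfolding walks_def vs_def using SAW_0[OF assms(1)] L cS by simp
  have "set us \<subseteq> Dirs"
  proof
    fix u assume "u \<in> set us"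
    then obtain i where i: "i \<in> P" "u = (\<lambda>j. (\<gamma> ! Suc i) j - (\<gamma> ! i) j)" unfolding us_def using L by auto
    have "l1norm (\<lambda>j. (\<gamma> ! i) j - (\<gamma> ! Suc i) j) = 1" using assms(1) i P unfolding SAW_def by auto
    then show "u \<in> Dirs" unfolding Dirs_def i(2) by (simp add: l1norm_sym)
  qed
  moreover have "length us = card S" unfolding us_def using L cS by simp
  ultimately have "(vs, us) \<in> Gset n (card S)" unfolding Gset_def using vsw by simp
  then show ?thesis using mk by (intro bexI[of _ "(vs, us)"]) simp_all
qed


lemma even_abs_minus: "even (\<bar>x::int\<bar> - x)"
proof (cases "x \<ge> 0")
  case True then show ?thesis by simp
next
  case False
  then have "\<bar>x\<bar> - x = 2 * (- x)" by simp
  then show ?thesis by simp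
qed

lemma even_abs_term: "even (\<bar>x::int\<bar> - \<bar>y\<bar> - \<bar>x - y\<bar>)"
proof -
  have eq: "\<bar>x\<bar> - \<bar>y\<bar> - \<bar>x - y\<bar> = (\<bar>x\<bar> - x) - (\<bar>y\<bar> - y) - (\<bar>x - y\<bar> - (x - y))" by simp
  show ?thesis unfolding eq
    by (rule dvd_diff[OF dvd_diff[OF even_abs_minus[of x] even_abs_minus[of y]] even_abs_minus[of "x - y"]])
qed

lemma l1_neq: assumes "l1norm (\<lambda>i. a i - b i) = 1" shows "l1norm a \<noteq> l1norm b"
proof
  assume eq: "l1norm a = l1norm b"
  have "l1norm a - l1norm b - l1norm (\<lambda>i. a i - b i) = (\<Sum>i\<in>UNIV. \<bar>a i\<bar> - \<bar>b i\<bar> - \<bar>a i - b i\<bar>)"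
    unfolding l1norm_def by (simp add: sum_subtractf)
  moreover have "even (\<Sum>i\<in>UNIV. \<bar>a i\<bar> - \<bar>b i\<bar> - \<bar>a i - b i\<bar>)"
    by (intro dvd_sum even_abs_term)
  ultimately have "even (l1norm a - l1norm b - l1norm (\<lambda>i. a i - b i))" by simp
  then show False using eq assms by simp
qed

lemma vtx_min: assumes "e = {a, b}" "l1norm a < l1norm b" shows "vtx e = a"
  unfolding vtx_def
proof (rule the_equality)
  show "a \<in> e \<and> (\<forall>y\<in>e. l1norm a \<le> l1norm y)" using assms by auto
next
  fix z assume "z \<in> e \<and> (\<forall>y\<in>e. l1norm z \<le> l1norm y)"
  then show "z = a" using assms by auto
qed

lemma vtx_nn: assumes "e \<in> nn_edges" shows "\<exists>u\<in>Dirs. e = {vtx e, \<lambda>i. vtx e i + u i}"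
proof -
  obtain a b where ab: "e = {a, b}" "l1norm (\<lambda>i. a i - b i) = 1"
    using assms unfolding nn_edges_def by blast
  have ne: "l1norm a \<noteq> l1norm b" by (rule l1_neq[OF ab(2)])
  show ?thesis
  proof (cases "l1norm a < l1norm b")
    case True
    then have v: "vtx e = a" by (rule vtx_min[OF ab(1)])
    have "l1norm (\<lambda>i. b i - a i) = 1" using ab(2) l1norm_sym[of a b] by simp
    then have d: "(\<lambda>i. b i - a i) \<in> Dirs" unfolding Dirs_def by simp
    have h: "(\<lambda>i. a i + (b i - a i)) = b" by simp
    have "e = {vtx e, \<lambda>i. vtx e i + (b i - a i)}" unfolding v using ab(1) h by simp
    then show ?thesis using d by (intro bexI[of _ "\<lambda>i. b i - a i"]) simp_all
  next
    case False
    then have lt: "l1norm b < l1norm a" using ne by simp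
    have e2: "e = {b, a}" using ab(1) by (simp add: insert_commute)
    have v: "vtx e = b" by (rule vtx_min[OF e2 lt])
    have d: "(\<lambda>i. a i - b i) \<in> Dirs" using ab(2) unfolding Dirs_def by simp
    have h: "(\<lambda>i. b i + (a i - b i)) = a" by simp
    have "e = {vtx e, \<lambda>i. vtx e i + (a i - b i)}" unfolding v using e2 h by simp
    then show ?thesis using d by (intro bexI[of _ "\<lambda>i. a i - b i"]) simp_all
  qed
qed

lemma linfnorm_sym: "linfnorm (\<lambda>j. a j - b j) = linfnorm (\<lambda>j. b j - a j)"
  unfolding linfnorm_def by (simp add: abs_minus_commute)

lemma abs_le_linfnorm: "\<bar>w i\<bar> \<le> linfnorm w"
  unfolding linfnorm_def by (rule Max_ge) auto

lemma far_sym: "e \<in> nn_edges \<Longrightarrow> e' \<in> far_edges k e \<Longrightarrow> e \<in> far_edges k e'"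
proof -
  assume a: "e \<in> nn_edges" "e' \<in> far_edges k e"
  then show ?thesis unfolding far_edges_def using linfnorm_sym[of "vtx e" "vtx e'"] by simp
qed

definition near :: "nat \<Rightarrow> ('d::finite) edge \<Rightarrow> 'd edge set" where
  "near k e = insert e {e' \<in> nn_edges. e' \<notin> far_edges k e}"

definition cst :: "nat \<Rightarrow> nat \<Rightarrow> nat" where
  "cst k d = (2 * k + 1) ^ d * 3 ^ d + 1"

lemma near_sub: "{e' \<in> nn_edges. e' \<notin> far_edges k e} \<subseteq>
   (\<lambda>(v, u). {v, \<lambda>i. v i + u i}) ` (((\<lambda>w i. w i + vtx e i) ` lbox k) \<times> Dirs)"
proof
  fix e' assume e': "e' \<in> {e' \<in> nn_edges. e' \<notin> far_edges k e}"
  then have nn: "e' \<in> nn_edges" and lt: "linfnorm (\<lambda>j. vtx e j - vtx e' j) < int k"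
    unfolding far_edges_def by auto
  obtain u where u: "u \<in> Dirs" "e' = {vtx e', \<lambda>i. vtx e' i + u i}" using vtx_nn[OF nn] by blast
  have "(\<lambda>i. vtx e' i - vtx e i) \<in> lbox k" unfolding lbox_def
  proof (intro CollectI allI)
    fix i have "\<bar>vtx e i - vtx e' i\<bar> \<le> linfnorm (\<lambda>j. vtx e j - vtx e' j)"
      by (rule abs_le_linfnorm[of "\<lambda>j. vtx e j - vtx e' j"])
    then show "\<bar>vtx e' i - vtx e i\<bar> \<le> int k" using lt by (simp add: abs_minus_commute)
  qed
  then have "vtx e' \<in> (\<lambda>w i. w i + vtx e i) ` lbox k"
    by (intro image_eqI[where x="\<lambda>i. vtx e' i - vtx e i"]) auto
  then have "(vtx e', u) \<in> ((\<lambda>w i. w i + vtx e i) ` lbox k) \<times> Dirs" using u by simp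
  then show "e' \<in> (\<lambda>(v, u). {v, \<lambda>i. v i + u i}) ` (((\<lambda>w i. w i + vtx e i) ` lbox k) \<times> Dirs)"
    using u by (intro image_eqI[where x="(vtx e', u)"]) auto
qed

lemma near_card: "finite (near k (e::('d::finite) edge)) \<and> card (near k e) \<le> cst k CARD('d)"
proof -
  let ?A = "((\<lambda>w i. w i + vtx e i) ` (lbox k :: 'd vertex set)) \<times> (Dirs :: 'd vertex set)"
  have fA: "finite ?A" by (intro finite_cartesian_product finite_imageI finite_lbox finite_Dirs)
  have "card ?A \<le> card (lbox k :: 'd vertex set) * card (Dirs :: 'd vertex set)"
    unfolding card_cartesian_product by (intro mult_le_mono1 card_image_le finite_lbox)
  also have "\<dots> \<le> (2 * k + 1) ^ CARD('d) * 3 ^ CARD('d)"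
    unfolding card_lbox by (intro mult_le_mono2 card_Dirs)
  finally have cA: "card ?A \<le> (2 * k + 1) ^ CARD('d) * 3 ^ CARD('d)" .
  let ?B = "(\<lambda>(v, u). {v, \<lambda>i. v i + u i}) ` ?A"
  have fB: "finite ?B" using fA by simp
  have cB: "card ?B \<le> (2 * k + 1) ^ CARD('d) * 3 ^ CARD('d)"
    using card_image_le[OF fA] cA by (rule le_trans)
  have sub: "{e' \<in> nn_edges. e' \<notin> far_edges k e} \<subseteq> ?B" by (rule near_sub)
  have f1: "finite {e' \<in> nn_edges. e' \<notin> far_edges k e}" using finite_subset[OF sub fB] .
  have "card {e' \<in> nn_edges. e' \<notin> far_edges k e} \<le> card ?B" by (rule card_mono[OF fB sub])
  moreover have "card (near k e) \<le> Suc (card {e' \<in> nn_edges. e' \<notin> far_edges k e})"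
    unfolding near_def using f1 by (simp add: card_insert_if)
  ultimately have "card (near k e) \<le> (2 * k + 1) ^ CARD('d) * 3 ^ CARD('d) + 1"
    using cB by simp
  then show ?thesis unfolding cst_def near_def using f1 by simp
qed

definition sep :: "nat \<Rightarrow> ('d::finite) edge set \<Rightarrow> bool" where
  "sep k S \<longleftrightarrow> (\<forall>x\<in>S. \<forall>y\<in>S. x \<noteq> y \<longrightarrow> y \<in> far_edges k x)"

lemma greedy:
  "finite T \<Longrightarrow> T \<subseteq> nn_edges \<Longrightarrow> cst k CARD('d) * j < card T \<Longrightarrow>
   \<exists>S\<subseteq>T. card S = Suc j \<and> sep k (S :: ('d::finite) edge set)"
proof (induction j arbitrary: T)
  case 0
  have "T \<noteq> {}" using 0 by (cases "T = {}") auto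
  then obtain e where "e \<in> T" by blast
  then show ?case by (intro exI[of _ "{e}"]) (auto simp: sep_def)
next
  case (Suc j)
  have "T \<noteq> {}" using Suc.prems by (cases "T = {}") auto
  then obtain e where e: "e \<in> T" by blast
  let ?T = "T - near k e"
  have nc: "finite (near k e)" "card (near k e) \<le> cst k CARD('d)" using near_card by auto
  have "T \<subseteq> ?T \<union> near k e" by auto
  then have "card T \<le> card (?T \<union> near k e)" using Suc.prems(1) nc(1) by (intro card_mono) auto
  also have "\<dots> \<le> card ?T + card (near k e)" by (rule card_Un_le)
  finally have "card T \<le> card ?T + card (near k e)" .
  then have "cst k CARD('d) * j < card ?T" using Suc.prems nc by simp
  then obtain S where S: "S \<subseteq> ?T" "card S = Suc j" "sep k S"
    using Suc.IH[of ?T] Suc.prems by auto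
  have eS: "e \<notin> S" using S(1) unfolding near_def by auto
  have fS: "finite S" using S(2) by (intro card_ge_0_finite) simp
  have far: "\<And>y. y \<in> S \<Longrightarrow> y \<in> far_edges k e"
  proof -
    fix y assume "y \<in> S"
    then have "y \<in> T" "y \<notin> near k e" using S(1) by auto
    then show "y \<in> far_edges k e" using Suc.prems(2) unfolding near_def by auto
  qed
  have "sep k (insert e S)" unfolding sep_def
  proof (intro ballI impI)
    fix x y assume xy: "x \<in> insert e S" "y \<in> insert e S" "x \<noteq> y"
    show "y \<in> far_edges k x"
    proof (cases "x = e")
      case True then show ?thesis using xy far by auto
    next
      case False
      then have xS: "x \<in> S" using xy by auto
      show ?thesis
      proof (cases "y = e")
        case True
        then show ?thesis using far_sym[of e "x" k] far[OF xS] e Suc.prems(2) by auto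
      next
        case False
        then show ?thesis using xS xy S(3) unfolding sep_def by auto
      qed
    qed
  qed
  moreover have "card (insert e S) = Suc (Suc j)" using eS fS S(2) by simp
  moreover have "insert e S \<subseteq> T" using e S(1) by auto
  ultimately show ?case by blast
qed


lemma path_edges_img: "path_edges \<gamma> = (\<lambda>i. {\<gamma> ! i, \<gamma> ! Suc i}) ` {i. Suc i < length \<gamma>}"
  unfolding path_edges_def by blast

lemma finite_path_edges: "finite (path_edges \<gamma>)"
proof -
  have "finite {i. Suc i < length \<gamma>}" by (rule finite_subset[of _ "{..<length \<gamma>}"]) auto
  then show ?thesis unfolding path_edges_img by simp
qed

lemma SAW_in_box: assumes "\<gamma> \<in> SAW n" "v \<in> set \<gamma>" shows "v \<in> lbox n"
proof -
  obtain i where i: "i < length \<gamma>" "v = \<gamma> ! i" using assms(2) by (auto simp: in_set_conv_nth)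
  have "i \<le> n" using i SAW_length[OF assms(1)] by simp
  then have "dist1 (\<gamma> ! i) (\<gamma> ! 0) \<le> n" using SAW_dist[OF assms(1), of 0 i] by simp
  then have "(\<lambda>j. (\<gamma> ! i) j - (\<gamma> ! 0) j) \<in> lbox n" by (rule dist1_lbox)
  then show ?thesis using i SAW_0[OF assms(1)] by simp
qed

lemma finite_SAW: "finite (SAW n :: ('d::finite) vertex list set)"
proof -
  have "SAW n \<subseteq> {xs. set xs \<subseteq> (lbox n :: 'd vertex set) \<and> length xs = Suc n}"
    using SAW_in_box SAW_length by blast
  then show ?thesis using finite_lists_length_eq[OF finite_lbox] finite_subset by blast
qed

lemma SAW_nonempty: "SAW n \<noteq> ({} :: ('d::finite) vertex list set)"
proof -
  obtain i0 :: 'd where True by simp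
  define f where "f = (\<lambda>m::nat. (\<lambda>i. if i = i0 then int m else 0) :: 'd vertex)"
  define \<gamma> where "\<gamma> = map f [0..<Suc n]"
  have inj: "inj f"
  proof (rule injI)
    fix a b assume "f a = f b"
    then have "f a i0 = f b i0" by simp
    then show "a = b" unfolding f_def by simp
  qed
  have "\<gamma> \<in> SAW n" unfolding SAW_def
  proof (intro CollectI conjI allI impI)
    show "length \<gamma> = n + 1" unfolding \<gamma>_def by simp
    have "inj_on f (set [0..<Suc n])" using inj by (rule inj_on_subset) simp
    then show "distinct \<gamma>" unfolding \<gamma>_def distinct_map by (simp del: upt_Suc)
    have nth: "\<And>m. m \<le> n \<Longrightarrow> \<gamma> ! m = f m" unfolding \<gamma>_def by (subst nth_map_upt) auto
    show "\<gamma> ! 0 = (\<lambda>_. 0)" using nth[of 0] unfolding f_def by (simp add: fun_eq_iff)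
    fix m assume m: "m < n"
    have "\<gamma> ! m = f m" "\<gamma> ! Suc m = f (Suc m)" using m nth by simp_all
    moreover have "(\<Sum>i\<in>UNIV. \<bar>f m i - f (Suc m) i\<bar>) = (\<Sum>i\<in>UNIV. if i = i0 then 1 else 0)"
      by (rule sum.cong) (auto simp: f_def)
    ultimately show "l1norm (\<lambda>j. (\<gamma> ! m) j - (\<gamma> ! Suc m) j) = 1"
      unfolding l1norm_def by simp
  qed
  then show ?thesis by blast
qed

lemma sum_bool_card: "finite A \<Longrightarrow> (\<Sum>e\<in>A. of_bool (P e) :: real) = real (card {e\<in>A. P e})"
proof (induction A rule: finite_induct)
  case empty then show ?case by simp
next
  case (insert x F)
  have "{e \<in> insert x F. P e} = (if P x then insert x {e \<in> F. P e} else {e \<in> F. P e})" by auto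
  then show ?case using insert by simp
qed

lemma Nmax_attained:
  "\<exists>\<gamma>\<in>SAW n. Nmax X n \<omega> = real (card {e \<in> path_edges \<gamma>. X e \<omega>})"
proof -
  let ?f = "\<lambda>\<gamma>. \<Sum>e\<in>path_edges \<gamma>. of_bool (X e \<omega>) :: real"
  have "Max (?f ` SAW n) \<in> ?f ` SAW n"
    using finite_SAW SAW_nonempty by (intro Max_in) auto
  then obtain \<gamma> where "\<gamma> \<in> SAW n" "Nmax X n \<omega> = ?f \<gamma>" unfolding Nmax_def by auto
  moreover have "?f \<gamma> = real (card {e \<in> path_edges \<gamma>. X e \<omega>})"
    by (rule sum_bool_card[OF finite_path_edges])
  ultimately show ?thesis by auto
qed

lemma card_path_edges: assumes "\<gamma> \<in> SAW n" shows "card (path_edges \<gamma>) \<le> n"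
  unfolding path_edges_SAW[OF assms] by (rule order_trans[OF card_image_le]) simp_all

lemma Nmax_bounds: "0 \<le> Nmax X n \<omega> \<and> Nmax X n \<omega> \<le> real n"
proof -
  obtain \<gamma> where g: "\<gamma> \<in> SAW n" "Nmax X n \<omega> = real (card {e \<in> path_edges \<gamma>. X e \<omega>})"
    using Nmax_attained[of n X \<omega>] by blast
  have "card {e \<in> path_edges \<gamma>. X e \<omega>} \<le> card (path_edges \<gamma>)"
    by (rule card_mono[OF finite_path_edges]) auto
  then show ?thesis using g card_path_edges[OF g(1)] by simp
qed

lemma Nmax_nat: "\<exists>m::nat. Nmax X n \<omega> = real m"
  using Nmax_attained[of n X \<omega>] by blast


definition Ev :: "('w) measure \<Rightarrow> (('d::finite) edge \<Rightarrow> 'w \<Rightarrow> bool) \<Rightarrow> 'd edge set \<Rightarrow> 'w set" where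
  "Ev M X S = {\<omega> \<in> space M. \<forall>e\<in>S. X e \<omega>}"

locale perc = prob_space M for M :: "(('d::finite) edge \<Rightarrow> bool) measure" +
  fixes X :: "'d edge \<Rightarrow> ('d edge \<Rightarrow> bool) \<Rightarrow> bool" and p :: real and k :: nat
  assumes p0: "0 \<le> p" and p1: "p \<le> 1"
  and Xmeas: "\<And>e. e \<in> nn_edges \<Longrightarrow> X e \<in> measurable M (count_space UNIV)"
  and Xmarg: "\<And>e. e \<in> nn_edges \<Longrightarrow> measure M {\<omega> \<in> space M. X e \<omega>} = p"
  and Xind: "\<And>e. e \<in> nn_edges \<Longrightarrow> indep_set
          {X e -` A \<inter> space M | A. A \<in> sets (count_space UNIV)}
          {(\<lambda>\<omega>. \<lambda>e'\<in>far_edges k e. X e' \<omega>) -` A \<inter> space M | A.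
             A \<in> sets (PiM (far_edges k e) (\<lambda>_. count_space UNIV))}"
begin

lemma Xset: assumes "e \<in> nn_edges" shows "{\<omega> \<in> space M. X e \<omega>} \<in> events"
proof -
  have "X e -` {True} \<inter> space M \<in> events" by (rule measurable_sets[OF Xmeas[OF assms]]) simp
  moreover have "X e -` {True} \<inter> space M = {\<omega> \<in> space M. X e \<omega>}" by auto
  ultimately show ?thesis by simp
qed

lemma Ev_insert: "Ev M X (insert e S) = {\<omega> \<in> space M. X e \<omega>} \<inter> Ev M X S"
  unfolding Ev_def by auto

lemma Ev_sets: "finite S \<Longrightarrow> S \<subseteq> nn_edges \<Longrightarrow> Ev M X S \<in> events"
proof (induction S rule: finite_induct)
  case empty then show ?case by (simp add: Ev_def)
next
  case (insert e S)
  then show ?case unfolding Ev_insert using Xset by (intro sets.Int) auto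
qed

lemma sep_subset: "sep k S \<Longrightarrow> S' \<subseteq> S \<Longrightarrow> sep k S'"
  unfolding sep_def by blast

lemma prob_Ev: "finite S \<Longrightarrow> S \<subseteq> nn_edges \<Longrightarrow> sep k S \<Longrightarrow> prob (Ev M X S) = p ^ card S"
proof (induction S rule: finite_induct)
  case empty then show ?case by (simp add: Ev_def prob_space)
next
  case (insert e S)
  let ?F = "far_edges k e"
  have e: "e \<in> nn_edges" using insert by simp
  have sepS: "sep k S" using insert.prems(2) by (rule sep_subset) auto
  have SF: "S \<subseteq> ?F"
  proof
    fix y assume "y \<in> S"
    then have "y \<noteq> e" "y \<in> insert e S" using insert by auto
    then show "y \<in> ?F" using insert.prems(2) unfolding sep_def by auto
  qed
  let ?a = "X e -` {True} \<inter> space M"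
  have a_eq: "?a = {\<omega> \<in> space M. X e \<omega>}" by auto
  have a_in: "?a \<in> {X e -` A \<inter> space M | A. A \<in> sets (count_space UNIV)}"
    unfolding mem_Collect_eq by (intro exI[of _ "{True}"]) simp
  let ?P = "PiM ?F (\<lambda>_. count_space (UNIV :: bool set))"
  let ?C = "{f \<in> space ?P. \<forall>e'\<in>S. f e'}"
  have "(\<lambda>f. \<forall>e'\<in>S. f e') \<in> measurable ?P (count_space UNIV)"
  proof (rule pred_intros_finite(3)[OF insert.hyps(1)])
    fix e' assume "e' \<in> S"
    then have "e' \<in> ?F" using SF by auto
    then show "(\<lambda>f. f e') \<in> measurable ?P (count_space UNIV)"
      using measurable_component_singleton[of e' ?F "\<lambda>_. count_space (UNIV :: bool set)"] by simp
  qed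
  then have C_in: "?C \<in> sets ?P" by (simp add: pred_def)
  let ?r = "\<lambda>\<omega>. \<lambda>e'\<in>?F. X e' \<omega>"
  have b_eq: "?r -` ?C \<inter> space M = Ev M X S"
  proof (rule set_eqI)
    fix \<omega>
    have "?r \<omega> \<in> space ?P" unfolding space_PiM by (simp add: restrict_PiE_iff)
    moreover have "(\<forall>e'\<in>S. ?r \<omega> e') \<longleftrightarrow> (\<forall>e'\<in>S. X e' \<omega>)" using SF by auto
    ultimately show "\<omega> \<in> ?r -` ?C \<inter> space M \<longleftrightarrow> \<omega> \<in> Ev M X S" unfolding Ev_def by auto
  qed
  have b_in: "Ev M X S \<in> {?r -` A \<inter> space M | A. A \<in> sets ?P}"
    unfolding mem_Collect_eq using C_in b_eq by (intro exI[of _ ?C]) simp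
  have "prob (Ev M X (insert e S)) = prob (?a \<inter> Ev M X S)" unfolding Ev_insert a_eq by simp
  also have "\<dots> = prob ?a * prob (Ev M X S)" by (rule indep_setD[OF Xind[OF e] a_in b_in])
  also have "\<dots> = p * p ^ card S"
    using insert sepS Xmarg[OF e] a_eq by simp
  finally show ?case using insert by simp
qed

end


context perc begin

lemma Nmax_meas: "Nmax X n \<in> borel_measurable M"
proof -
  have ob: "\<And>e. e \<in> nn_edges \<Longrightarrow> (\<lambda>\<omega>. of_bool (X e \<omega>) :: real) \<in> borel_measurable M"
    by (rule measurable_compose[OF Xmeas]) simp_all
  have sm: "\<And>\<gamma>. (\<gamma> :: 'd vertex list) \<in> SAW n \<Longrightarrow> (\<lambda>\<omega>. \<Sum>e\<in>path_edges \<gamma>. of_bool (X e \<omega>) :: real) \<in> borel_measurable M"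
  proof -
    fix \<gamma> :: "'d vertex list" assume g: "\<gamma> \<in> SAW n"
    show "(\<lambda>\<omega>. \<Sum>e\<in>path_edges \<gamma>. of_bool (X e \<omega>) :: real) \<in> borel_measurable M"
      using ob path_edges_nn[OF g] by (intro borel_measurable_sum) auto
  qed
  have eq: "Nmax X n = (\<lambda>\<omega>. Max ((\<lambda>\<gamma>. \<Sum>e\<in>path_edges \<gamma>. of_bool (X e \<omega>) :: real) ` (SAW n :: 'd vertex list set)))"
    by (rule ext) (simp add: Nmax_def)
  show ?thesis unfolding eq using sm by (intro borel_measurable_Max finite_SAW) auto
qed

lemma finite_mk: "finite (mk vs us)"
  unfolding mk_def by simp

lemma core:
  fixes x :: real assumes x: "0 < x" "x < 1"
  shows "prob {\<omega> \<in> space M. real (cst k CARD('d) * j) < Nmax X n \<omega>}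
     \<le> (1 / x) ^ n * ((2 / (1 - x)) ^ CARD('d) * 3 ^ CARD('d)) ^ Suc j * p ^ Suc j"
proof -
  let ?m = "\<lambda>g. mk (fst g) (snd g) :: 'd edge set"
  define G' where "G' = {g \<in> (Gset n (Suc j) :: ('d vertex list \<times> 'd vertex list) set).
     ?m g \<subseteq> nn_edges \<and> sep k (?m g) \<and> card (?m g) = Suc j}"
  have fG: "finite (Gset n (Suc j) :: ('d vertex list \<times> 'd vertex list) set)"
   and cG: "real (card (Gset n (Suc j) :: ('d vertex list \<times> 'd vertex list) set))
      \<le> (1 / x) ^ n * ((2 / (1 - x)) ^ CARD('d) * 3 ^ CARD('d)) ^ Suc j"
    using card_Gset[OF x, of n "Suc j"] by auto
  have G'sub: "G' \<subseteq> Gset n (Suc j)" unfolding G'_def by auto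
  have fG': "finite G'" by (rule finite_subset[OF G'sub fG])
  have sub: "{\<omega> \<in> space M. real (cst k CARD('d) * j) < Nmax X n \<omega>} \<subseteq> (\<Union>g\<in>G'. Ev M X (?m g))"
  proof
    fix \<omega> assume "\<omega> \<in> {\<omega> \<in> space M. real (cst k CARD('d) * j) < Nmax X n \<omega>}"
    then have om: "\<omega> \<in> space M" and lt: "real (cst k CARD('d) * j) < Nmax X n \<omega>" by auto
    obtain \<gamma> where g: "\<gamma> \<in> SAW n" "Nmax X n \<omega> = real (card {e \<in> path_edges \<gamma>. X e \<omega>})"
      using Nmax_attained[of n X \<omega>] by blast
    let ?T = "{e \<in> path_edges \<gamma>. X e \<omega>}"
    have "real (cst k CARD('d) * j) < real (card ?T)" using lt g(2) by simp
    then have cT: "cst k CARD('d) * j < card ?T" by (simp only: of_nat_less_iff)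
    have fT: "finite ?T" by (rule finite_subset[OF _ finite_path_edges[of \<gamma>]]) auto
    have Tnn: "?T \<subseteq> nn_edges" using path_edges_nn[OF g(1)] by auto
    obtain S where S: "S \<subseteq> ?T" "card S = Suc j" "sep k S" using greedy[OF fT Tnn cT] by blast
    have "S \<subseteq> path_edges \<gamma>" using S(1) by auto
    then obtain g0 where g0: "g0 \<in> Gset n (card S)" "?m g0 = S" using path_to_G[OF g(1)] by blast
    have "g0 \<in> G'" unfolding G'_def using g0 S Tnn by auto
    moreover have "\<omega> \<in> Ev M X (?m g0)" unfolding g0(2) Ev_def using om S(1) by auto
    ultimately show "\<omega> \<in> (\<Union>g\<in>G'. Ev M X (?m g))" by blast
  qed
  have evs: "\<And>g. g \<in> G' \<Longrightarrow> Ev M X (?m g) \<in> events"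
    unfolding G'_def using finite_mk by (intro Ev_sets) auto
  have "prob {\<omega> \<in> space M. real (cst k CARD('d) * j) < Nmax X n \<omega>} \<le> prob (\<Union>g\<in>G'. Ev M X (?m g))"
    using evs fG' by (intro finite_measure_mono[OF sub] sets.finite_UN) auto
  also have "\<dots> \<le> (\<Sum>g\<in>G'. prob (Ev M X (?m g)))"
    using evs fG' by (intro measure_UNION_le) auto
  also have "\<dots> = (\<Sum>g\<in>G'. p ^ Suc j)"
  proof (rule sum.cong[OF refl])
    fix g assume "g \<in> G'"
    then show "prob (Ev M X (?m g)) = p ^ Suc j"
      unfolding G'_def using prob_Ev[OF finite_mk] by auto
  qed
  also have "\<dots> = real (card G') * p ^ Suc j" by simp
  also have "\<dots> \<le> real (card (Gset n (Suc j) :: ('d vertex list \<times> 'd vertex list) set)) * p ^ Suc j"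
    using p0 card_mono[OF fG G'sub] by (intro mult_right_mono) auto
  also have "\<dots> \<le> (1 / x) ^ n * ((2 / (1 - x)) ^ CARD('d) * 3 ^ CARD('d)) ^ Suc j * p ^ Suc j"
    using p0 cG by (intro mult_right_mono) auto
  finally show ?thesis .
qed

end


lemma root_pow: assumes "0 \<le> (p::real)" "d \<ge> 1" shows "(p powr (1 / real d)) ^ d = p"
proof (cases "p = 0")
  case True then show ?thesis using assms by simp
next
  case False
  then have pp: "0 < p" using assms by simp
  have "(p powr (1 / real d)) ^ d = (p powr (1 / real d)) powr (real d)"
    using pp by (simp add: powr_realpow)
  also have "\<dots> = p powr (1 / real d * real d)" by (rule powr_powr)
  also have "\<dots> = p" using assms pp by simp
  finally show ?thesis .
qed

lemma pow_le_self: assumes "0 \<le> (x::real)" "x \<le> 1" "d \<ge> 1" shows "x ^ d \<le> x"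
proof -
  have "x ^ d = x * x ^ (d - 1)" using assms(3) by (metis Suc_diff_le diff_Suc_1 power_Suc)
  also have "\<dots> \<le> x * 1" using assms by (intro mult_left_mono power_le_one) auto
  finally show ?thesis by simp
qed

lemma cst_pos: "cst k d \<ge> 1"
  unfolding cst_def by simp

lemma ceil_split: assumes "r > 0" "(c::real) > 0"
  shows "\<exists>j::nat. c * real j < r \<and> r / c \<le> real (Suc j)"
proof -
  define j where "j = nat \<lceil>r / c\<rceil> - 1"
  have rc: "r / c > 0" using assms by simp
  then have ce: "\<lceil>r / c\<rceil> \<ge> 1" by (simp add: le_ceiling_iff)
  then have sj: "real (Suc j) = real_of_int \<lceil>r / c\<rceil>" unfolding j_def by (simp add: of_nat_diff)
  have "real_of_int \<lceil>r / c\<rceil> < r / c + 1" using ceiling_correct[of "r / c"] by linarith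
  then have "real j < r / c" using sj by simp
  then have "c * real j < c * (r / c)" using assms by (intro mult_strict_left_mono) auto
  then have "c * real j < r" using assms by simp
  moreover have "r / c \<le> real (Suc j)" using sj by (simp add: le_of_int_ceiling)
  ultimately show ?thesis by blast
qed

context perc begin

lemma core2:
  fixes \<eta> :: real assumes h: "0 < \<eta>" "\<eta> \<le> 1"
  shows "prob {\<omega> \<in> space M. real (cst k CARD('d) * j) < Nmax X n \<omega>}
     \<le> exp (\<eta> * real n) * ((12 / \<eta>) ^ CARD('d) * p) ^ Suc j"
proof -
  define x where "x = 1 / (1 + \<eta>)"
  have x: "0 < x" "x < 1" unfolding x_def using h by auto
  have c1: "(1 / x) ^ n \<le> exp (\<eta> * real n)"
  proof -
    have "(1 / x) ^ n = (1 + \<eta>) ^ n" unfolding x_def by simp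
    also have "\<dots> \<le> exp \<eta> ^ n" using h by (intro power_mono) (auto simp: add.commute)
    also have "\<dots> = exp (\<eta> * real n)" by (simp add: exp_of_nat_mult[symmetric] mult.commute)
    finally show ?thesis .
  qed
  have "2 / (1 - x) = 2 * (1 + \<eta>) / \<eta>" unfolding x_def using h by (simp add: field_simps)
  also have "\<dots> \<le> 4 / \<eta>" using h by (intro divide_right_mono) auto
  finally have c2: "2 / (1 - x) \<le> 4 / \<eta>" .
  have "(2 / (1 - x)) ^ CARD('d) * 3 ^ CARD('d) \<le> (4 / \<eta>) ^ CARD('d) * 3 ^ CARD('d)"
    using x c2 by (intro mult_right_mono power_mono) auto
  also have "\<dots> = (12 / \<eta>) ^ CARD('d)" by (simp add: power_mult_distrib[symmetric])
  finally have c3: "(2 / (1 - x)) ^ CARD('d) * 3 ^ CARD('d) \<le> (12 / \<eta>) ^ CARD('d)" .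
  have c4: "((2 / (1 - x)) ^ CARD('d) * 3 ^ CARD('d)) ^ Suc j * p ^ Suc j \<le> ((12 / \<eta>) ^ CARD('d) * p) ^ Suc j"
  proof -
    have "(2 / (1 - x)) ^ CARD('d) * 3 ^ CARD('d) * p \<le> (12 / \<eta>) ^ CARD('d) * p"
      using c3 p0 by (rule mult_right_mono)
    moreover have "0 \<le> (2 / (1 - x)) ^ CARD('d) * 3 ^ CARD('d) * p" using x p0 by simp
    ultimately have "((2 / (1 - x)) ^ CARD('d) * 3 ^ CARD('d) * p) ^ Suc j \<le> ((12 / \<eta>) ^ CARD('d) * p) ^ Suc j"
      by (rule power_mono)
    then show ?thesis by (simp only: power_mult_distrib)
  qed
  have "prob {\<omega> \<in> space M. real (cst k CARD('d) * j) < Nmax X n \<omega>}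
     \<le> (1 / x) ^ n * ((2 / (1 - x)) ^ CARD('d) * 3 ^ CARD('d)) ^ Suc j * p ^ Suc j"
    by (rule core[OF x])
  also have "\<dots> \<le> exp (\<eta> * real n) * ((12 / \<eta>) ^ CARD('d) * p) ^ Suc j"
    unfolding mult.assoc using c1 c4 x p0 by (intro mult_mono) auto
  finally show ?thesis .
qed

lemma Nset_meas: "{\<omega> \<in> space M. P (Nmax X n \<omega>)} \<in> events" if "\<And>y. P y \<longleftrightarrow> y \<in> S" "S \<in> sets borel" for P S
proof -
  have "{\<omega> \<in> space M. P (Nmax X n \<omega>)} = Nmax X n -` S \<inter> space M" using that by auto
  then show ?thesis using measurable_sets[OF Nmax_meas that(2)] by simp
qed

lemma ge_events: "{\<omega> \<in> space M. r \<le> Nmax X n \<omega>} \<in> events"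
  by (rule Nset_meas[of _ "{r..}"]) auto

lemma gt_events: "{\<omega> \<in> space M. r < Nmax X n \<omega>} \<in> events"
  by (rule Nset_meas[of _ "{r<..}"]) auto

end


lemma card_pos: "CARD('d::finite) \<ge> 1"
  using zero_less_card_finite[where 'a='d] by linarith

context perc begin

definition lam :: real where "lam = 12 * exp 2"

lemma cc_pos: "(real (cst k CARD('d))) \<ge> 1" using cst_pos[of k "CARD('d)"] by simp

lemma qq_nonneg: "(p powr (1 / real CARD('d))) \<ge> 0" by simp

lemma qq_pow: "(p powr (1 / real CARD('d))) ^ CARD('d) = p" using root_pow[OF p0 card_pos] .

lemma ge_sub_gt: "real (cst k CARD('d) * j) < r \<Longrightarrow>
  prob {\<omega> \<in> space M. r \<le> Nmax X n \<omega>} \<le> prob {\<omega> \<in> space M. real (cst k CARD('d) * j) < Nmax X n \<omega>}"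
  by (intro finite_measure_mono gt_events) auto

lemma TL: assumes pp: "0 < p" and lq: "lam * (p powr (1 / real CARD('d))) \<le> 1" and r: "0 < r" "(real (cst k CARD('d))) * lam * (p powr (1 / real CARD('d))) * real n \<le> r"
  shows "prob {\<omega> \<in> space M. r \<le> Nmax X n \<omega>} \<le> exp (- r / (real (cst k CARD('d))))"
proof -
  have ccp: "(real (cst k CARD('d))) > 0" using cc_pos by simp
  obtain j where j: "(real (cst k CARD('d))) * real j < r" "r / (real (cst k CARD('d))) \<le> real (Suc j)" using ceil_split[OF r(1) ccp] by blast
  have qp: "(p powr (1 / real CARD('d))) > 0" using pp by simp
  have lp: "lam > 0" unfolding lam_def by simp
  have eta: "0 < lam * (p powr (1 / real CARD('d)))" "lam * (p powr (1 / real CARD('d))) \<le> 1" using qp lp lq by auto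
  have "prob {\<omega> \<in> space M. r \<le> Nmax X n \<omega>} \<le> prob {\<omega> \<in> space M. real (cst k CARD('d) * j) < Nmax X n \<omega>}"
    using j(1) by (intro ge_sub_gt) simp
  also have "\<dots> \<le> exp (lam * (p powr (1 / real CARD('d))) * real n) * ((12 / (lam * (p powr (1 / real CARD('d))))) ^ CARD('d) * p) ^ Suc j"
    by (rule core2[OF eta])
  also have "(12 / (lam * (p powr (1 / real CARD('d))))) ^ CARD('d) * p = (12 / lam) ^ CARD('d)"
  proof -
    have "(12 / (lam * (p powr (1 / real CARD('d))))) ^ CARD('d) * p = (12 / (lam * (p powr (1 / real CARD('d))))) ^ CARD('d) * (p powr (1 / real CARD('d))) ^ CARD('d)" by (simp only: qq_pow)
    also have "\<dots> = (12 / (lam * (p powr (1 / real CARD('d)))) * (p powr (1 / real CARD('d)))) ^ CARD('d)" by (simp only: power_mult_distrib)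
    also have "12 / (lam * (p powr (1 / real CARD('d)))) * (p powr (1 / real CARD('d))) = 12 / lam" using qp by simp
    finally show ?thesis .
  qed
  also have "(12 / lam) = exp (- 2)" unfolding lam_def by (simp add: exp_minus field_simps)
  also have "exp (lam * (p powr (1 / real CARD('d))) * real n) * (exp (- 2) ^ CARD('d)) ^ Suc j \<le> exp (lam * (p powr (1 / real CARD('d))) * real n) * exp (- 2) ^ Suc j"
  proof -
    have "exp (- 2) \<le> (1::real)" by simp
    then have "exp (- 2) ^ CARD('d) \<le> exp (- 2::real)" using card_pos by (intro pow_le_self) auto
    then show ?thesis by (intro mult_left_mono power_mono) auto
  qed
  also have "\<dots> = exp (lam * (p powr (1 / real CARD('d))) * real n) * exp (real (Suc j) * (- 2))"
    by (simp only: exp_of_nat_mult)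
  also have "\<dots> = exp (lam * (p powr (1 / real CARD('d))) * real n - 2 * real (Suc j))"
    by (subst exp_add[symmetric]) (simp add: algebra_simps)
  also have "\<dots> \<le> exp (- r / (real (cst k CARD('d))))"
  proof -
    have "lam * (p powr (1 / real CARD('d))) * real n \<le> r / (real (cst k CARD('d)))" using r(2) ccp by (simp add: field_simps)
    then show ?thesis using j(2) by simp
  qed
  finally show ?thesis .
qed

lemma TS: assumes n: "n \<ge> 1" and sm: "12 * (real n * (p powr (1 / real CARD('d)))) \<le> exp (- 1)" and r: "0 < r"
  shows "prob {\<omega> \<in> space M. r \<le> Nmax X n \<omega>} \<le> exp 2 * (12 * (real n * (p powr (1 / real CARD('d))))) * exp (- r / (real (cst k CARD('d))))"
proof -
  let ?t = "real n * (p powr (1 / real CARD('d)))"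
  have ccp: "(real (cst k CARD('d))) > 0" using cc_pos by simp
  obtain j where j: "(real (cst k CARD('d))) * real j < r" "r / (real (cst k CARD('d))) \<le> real (Suc j)" using ceil_split[OF r(1) ccp] by blast
  have eta: "0 < 1 / real n" "1 / real n \<le> 1" using n by auto
  have "prob {\<omega> \<in> space M. r \<le> Nmax X n \<omega>} \<le> prob {\<omega> \<in> space M. real (cst k CARD('d) * j) < Nmax X n \<omega>}"
    using j(1) by (intro ge_sub_gt) simp
  also have "\<dots> \<le> exp (1 / real n * real n) * ((12 / (1 / real n)) ^ CARD('d) * p) ^ Suc j"
    by (rule core2[OF eta])
  also have "\<dots> = exp 1 * ((12 * ?t) ^ CARD('d)) ^ Suc j"
    using n qq_pow by (simp add: power_mult_distrib)
  also have "\<dots> \<le> exp 1 * ((12 * ?t) * exp (- 1) ^ j)"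
  proof -
    have t0: "0 \<le> 12 * ?t" by simp
    have t1: "12 * ?t \<le> 1" using sm by (meson exp_le_one_iff neg_le_0_iff_le order_trans zero_le_one)
    have A: "(12 * ?t) ^ CARD('d) \<le> 12 * ?t" using t0 t1 card_pos by (rule pow_le_self)
    have "((12 * ?t) ^ CARD('d)) ^ Suc j = (12 * ?t) ^ CARD('d) * ((12 * ?t) ^ CARD('d)) ^ j" by simp
    also have "\<dots> \<le> (12 * ?t) * exp (- 1) ^ j"
      using A sm t0 by (intro mult_mono power_mono) auto
    finally show ?thesis by simp
  qed
  also have "exp (- 1) ^ j = exp (- real j)" by (simp add: exp_of_nat_mult[symmetric])
  also have "exp 1 * (12 * ?t * exp (- real j)) \<le> exp 1 * (12 * ?t * exp (1 - r / (real (cst k CARD('d)))))"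
    using j(2) by (intro mult_left_mono) auto
  also have "\<dots> = exp 2 * (12 * ?t) * exp (- r / (real (cst k CARD('d))))"
    by (simp add: exp_diff exp_minus field_simps flip: exp_add)
  finally show ?thesis .
qed

end


lemma geom_sum_exp: assumes "(c::real) > 0"
  shows "(\<Sum>m\<in>{1..n}. exp (- real m / c)) \<le> 1 / (1 - exp (- 1 / c))"
proof -
  let ?y = "exp (- 1 / c)"
  have y: "0 \<le> ?y" "?y < 1" using assms by auto
  have "(\<Sum>m\<in>{1..n}. exp (- real m / c)) = (\<Sum>m\<in>{1..n}. ?y ^ m)"
  proof (rule sum.cong[OF refl])
    fix m show "exp (- real m / c) = ?y ^ m" by (simp add: exp_of_nat_mult[symmetric])
  qed
  also have "\<dots> \<le> (\<Sum>m\<in>{0..n}. ?y ^ m)" using y by (intro sum_mono2) auto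
  also have "\<dots> \<le> 1 / (1 - ?y)" by (rule geom_le[OF y])
  finally show ?thesis .
qed

context perc begin

lemma N_layer: assumes "\<omega> \<in> space M"
  shows "Nmax X n \<omega> = (\<Sum>m\<in>{1..n}. indicator {\<omega> \<in> space M. real m \<le> Nmax X n \<omega>} \<omega>)"
proof -
  obtain K where K: "Nmax X n \<omega> = real K" using Nmax_nat[of X n \<omega>] by blast
  have Kn: "K \<le> n" using Nmax_bounds[of X n \<omega>] K by simp
  have "(\<Sum>m\<in>{1..n}. indicator {\<omega> \<in> space M. real m \<le> Nmax X n \<omega>} \<omega> :: real)
      = (\<Sum>m\<in>{1..n}. if m \<le> K then 1 else 0)"
    using assms K by (intro sum.cong) (auto simp: indicator_def)
  also have "\<dots> = real (card ({1..n} \<inter> {m. m \<le> K}))" by (simp add: sum.If_cases)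
  also have "{1..n} \<inter> {m. m \<le> K} = {1..K}" using Kn by auto
  finally show ?thesis using K by simp
qed

lemma E_layer: "expectation (Nmax X n) = (\<Sum>m\<in>{1..n}. prob {\<omega> \<in> space M. real m \<le> Nmax X n \<omega>})"
proof -
  have "expectation (Nmax X n) = expectation (\<lambda>\<omega>. \<Sum>m\<in>{1..n}. indicator {\<omega> \<in> space M. real m \<le> Nmax X n \<omega>} \<omega>)"
    by (intro Bochner_Integration.integral_cong refl N_layer)
  also have "\<dots> = (\<Sum>m\<in>{1..n}. expectation (indicator {\<omega> \<in> space M. real m \<le> Nmax X n \<omega>}))"
    by (intro Bochner_Integration.integral_sum integrable_real_indicator ge_events) (simp add: less_top[symmetric])
  also have "\<dots> = (\<Sum>m\<in>{1..n}. prob {\<omega> \<in> space M. real m \<le> Nmax X n \<omega>})"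
    by (intro sum.cong refl) (simp add: Int_absorb2)
  finally show ?thesis .
qed

lemma E_le_n: "expectation (Nmax X n) \<le> real n"
proof -
  have "(\<Sum>m\<in>{1..n}. prob {\<omega> \<in> space M. real m \<le> Nmax X n \<omega>}) \<le> (\<Sum>m\<in>{1..n}. 1)"
    by (intro sum_mono) simp
  then show ?thesis unfolding E_layer by simp
qed

end


definition Gc :: "real \<Rightarrow> real" where "Gc c = 1 / (1 - exp (- 1 / c))"
definition C1c :: "real \<Rightarrow> real" where
  "C1c c = 12 * exp 2 + c * (12 * exp 2) + (1 + Gc c) * (12 * exp 1) + 12 * exp 2 * Gc c + 4 * (1 + c)"

lemma Gc_pos: "c > 0 \<Longrightarrow> Gc c > 0"
  unfolding Gc_def by simp

lemma count_lt: assumes "R \<ge> 0"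
  shows "(\<Sum>m\<in>{1..n}. if real m < R then 1 else 0 :: real) \<le> R"
proof -
  have "(\<Sum>m\<in>{1..n}. if real m < R then 1 else 0 :: real) = real (card ({1..n} \<inter> {m. real m < R}))"
    by (simp add: sum.If_cases)
  also have "card ({1..n} \<inter> {m. real m < R}) \<le> card {1..nat \<lfloor>R\<rfloor>}"
  proof (rule card_mono)
    show "{1..n} \<inter> {m. real m < R} \<subseteq> {1..nat \<lfloor>R\<rfloor>}"
    proof
      fix m assume "m \<in> {1..n} \<inter> {m. real m < R}"
      then have "1 \<le> m" "real m < R" by auto
      then have "int m \<le> \<lfloor>R\<rfloor>" by (simp add: le_floor_iff)
      then show "m \<in> {1..nat \<lfloor>R\<rfloor>}" using \<open>1 \<le> m\<close> by simp
    qed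
  qed simp
  then have "real (card ({1..n} \<inter> {m. real m < R})) \<le> real (nat \<lfloor>R\<rfloor>)" by simp
  also have "\<dots> \<le> R" using assms by simp
  finally show ?thesis .
qed

context perc begin

lemma part_i: "expectation (Nmax X n) \<le> C1c (real (cst k CARD('d))) * p powr (1 / real CARD('d)) * real n"
proof -
  define c where "c = real (cst k CARD('d))"
  define q where "q = p powr (1 / real CARD('d))"
  define G where "G = Gc c"
  define t where "t = q * real n"
  have c1: "c \<ge> 1" unfolding c_def using cc_pos .
  have q0: "q \<ge> 0" unfolding q_def by simp
  have t0: "t \<ge> 0" unfolding t_def using q0 by simp
  have G0: "G > 0" unfolding G_def using c1 Gc_pos by simp
  have lam0: "lam > 0" unfolding lam_def by simp
  have C1e: "C1c c = lam + c * lam + (1 + G) * (12 * exp 1) + 12 * exp 2 * G + 4 * (1 + c)"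
    unfolding C1c_def G_def lam_def by simp
  have Cparts: "lam \<le> C1c c" "c * lam + (1 + G) * (12 * exp 1) \<le> C1c c" "12 * exp 2 * G \<le> C1c c"
    unfolding C1e using c1 G0 lam0 by (auto simp: add_nonneg_nonneg)
  have geo: "(\<Sum>m\<in>{1..n}. exp (- real m / c)) \<le> G" unfolding G_def Gc_def using c1 geom_sum_exp[of c n] by simp
  show ?thesis
  proof (cases "n = 0")
    case True then show ?thesis unfolding E_layer by simp
  next
    case False
    then have n1: "n \<ge> 1" by simp
    show ?thesis
    proof (cases "lam * q \<le> 1")
      case False
      have "expectation (Nmax X n) \<le> real n" by (rule E_le_n)
      also have "\<dots> \<le> lam * q * real n" using mult_right_mono[of 1 "lam * q" "real n"] False by simp
      also have "\<dots> \<le> C1c c * q * real n" using Cparts(1) q0 by (intro mult_right_mono) auto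
      finally show ?thesis unfolding c_def q_def .
    next
      case lq: True
      show ?thesis
      proof (cases "12 * t \<le> exp (- 1)")
        case True
        have "expectation (Nmax X n) \<le> (\<Sum>m\<in>{1..n}. exp 2 * (12 * t) * exp (- real m / c))"
          unfolding E_layer
        proof (rule sum_mono)
          fix m assume "m \<in> {1..n}"
          then have "0 < real m" by simp
          from TS[OF n1 _ this] True show "prob {\<omega> \<in> space M. real m \<le> Nmax X n \<omega>} \<le> exp 2 * (12 * t) * exp (- real m / c)"
            unfolding t_def q_def c_def by (simp add: mult.commute)
        qed
        also have "\<dots> = exp 2 * (12 * t) * (\<Sum>m\<in>{1..n}. exp (- real m / c))" by (simp add: sum_distrib_left)
        also have "\<dots> \<le> exp 2 * (12 * t) * G" using geo t0 by (intro mult_left_mono) auto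
        also have "\<dots> = (12 * exp 2 * G) * t" by simp
        also have "\<dots> \<le> C1c c * t" using Cparts(3) t0 by (intro mult_right_mono) auto
        finally show ?thesis unfolding t_def c_def q_def by (simp add: mult.assoc)
      next
        case big: False
        have pp: "p > 0"
        proof (rule ccontr)
          assume "\<not> p > 0" then have "p = 0" using p0 by simp
          then have "t = 0" unfolding t_def q_def by simp
          then show False using big by simp
        qed
        define R where "R = c * lam * q * real n"
        have R0: "R \<ge> 0" unfolding R_def using c1 lam0 q0 by simp
        have "expectation (Nmax X n) \<le> (\<Sum>m\<in>{1..n}. (if real m < R then 1 else 0) + exp (- real m / c))"
          unfolding E_layer
        proof (rule sum_mono)
          fix m assume "m \<in> {1..n}"
          then have m0: "0 < real m" by simp
          show "prob {\<omega> \<in> space M. real m \<le> Nmax X n \<omega>} \<le> (if real m < R then 1 else 0) + exp (- real m / c)"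
          proof (cases "real m < R")
            case True then show ?thesis by (simp add: add_increasing2)
          next
            case False
            then have "real (cst k CARD('d)) * lam * p powr (1 / real CARD('d)) * real n \<le> real m"
              unfolding R_def c_def q_def by simp
            from TL[OF pp lq[unfolded q_def] m0 this] False show ?thesis unfolding c_def by simp
          qed
        qed
        also have "\<dots> = (\<Sum>m\<in>{1..n}. (if real m < R then 1 else 0)) + (\<Sum>m\<in>{1..n}. exp (- real m / c))"
          by (rule sum.distrib)
        also have "\<dots> \<le> R + G" using count_lt[OF R0] geo by (intro add_mono) auto
        also have "\<dots> \<le> c * lam * t + G * (12 * exp 1 * t)"
        proof -
          have "1 \<le> 12 * exp 1 * t"
          proof -
            have "exp (- 1) < 12 * t" using big by simp
            then have "exp 1 * exp (- 1) \<le> exp 1 * (12 * t)" by simp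
            then show ?thesis by (simp add: exp_minus field_simps)
          qed
          then have "G \<le> G * (12 * exp 1 * t)" using G0 by simp
          then show ?thesis unfolding R_def t_def by (simp add: mult.assoc)
        qed
        also have "\<dots> = (c * lam + G * (12 * exp 1)) * t" by (simp add: algebra_simps)
        also have "\<dots> \<le> C1c c * t"
        proof -
          have h: "(1 + G) * (12 * exp 1) = 12 * exp 1 + G * (12 * exp 1)" by (simp add: algebra_simps)
          have "0 < 12 * exp (1::real)" by simp
          then have "c * lam + G * (12 * exp 1) \<le> C1c c" using Cparts(2) h by linarith
          then show ?thesis using t0 by (rule mult_right_mono)
        qed
        finally show ?thesis unfolding t_def c_def q_def by (simp add: mult.assoc)
      qed
    qed
  qed
qed

end


lemma n0_props: assumes "0 < (p::real)" "p \<le> 1" "d \<ge> 1"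
  shows "nat \<lceil>p powr (- 2 / real d)\<rceil> \<ge> 1"
    "\<And>n. n \<ge> nat \<lceil>p powr (- 2 / real d)\<rceil> \<Longrightarrow> real n \<ge> p powr (- 2 / real d)"
proof -
  have "p powr (2 / real d) \<le> 1" using assms by (intro powr_le1) auto
  moreover have "p powr (2 / real d) > 0" using assms by simp
  ultimately have "1 \<le> 1 / p powr (2 / real d)" by simp
  then have ge1: "1 \<le> p powr (- 2 / real d)" by (simp add: powr_minus_divide)
  then show "nat \<lceil>p powr (- 2 / real d)\<rceil> \<ge> 1" by linarith
  fix n assume n: "n \<ge> nat \<lceil>p powr (- 2 / real d)\<rceil>"
  let ?x = "p powr (- 2 / real d)"
  have xc: "?x \<le> real_of_int \<lceil>?x\<rceil>" by (rule le_of_int_ceiling)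
  then have c0: "0 \<le> \<lceil>?x\<rceil>" using ge1 by linarith
  have e: "real (nat \<lceil>?x\<rceil>) = real_of_int \<lceil>?x\<rceil>" using c0 by simp
  have "real (nat \<lceil>?x\<rceil>) \<le> real n" using n by (simp only: of_nat_le_iff)
  then show "real n \<ge> ?x" using xc e by linarith
qed

lemma u_eq: assumes "0 < (p::real)"
  shows "p powr (1 / real d) * p powr (- 2 / real d) = p powr (- 1 / real d)"
proof -
  have "p powr (1 / real d) * p powr (- 2 / real d) = p powr (1 / real d + - 2 / real d)"
    by (rule powr_add[symmetric])
  also have "1 / real d + - 2 / real d = (1 + - 2) / real d" by (rule add_divide_distrib[symmetric])
  also have "(1 + - 2) / real d = - 1 / real d" by simp
  finally show ?thesis .
qed

lemma u_inv: assumes "0 < (p::real)"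
  shows "p powr (- 1 / real d) = 1 / p powr (1 / real d)"
  using powr_minus_divide[of p "1 / real d"] by simp

lemma exp_sq: "0 \<le> (u::real) \<Longrightarrow> u ^ 2 \<le> 4 * exp u"
proof -
  assume u: "0 \<le> u"
  have "u / 2 \<le> 1 + u / 2" by simp
  also have "\<dots> \<le> exp (u / 2)" by (rule exp_ge_add_one_self)
  finally have "(u / 2) ^ 2 \<le> exp (u / 2) ^ 2" using u by (intro power_mono) auto
  also have "exp (u / 2) ^ 2 = exp u" by (simp add: power2_eq_square flip: exp_add)
  finally show ?thesis by (simp add: power_divide)
qed


lemma exp_pow_div: "exp (- (a * real n) / c) = exp (- a / c) ^ n"
proof -
  have "exp (- a / c) ^ n = exp (real n * (- a / c))" by (rule exp_of_nat_mult[symmetric])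
  also have "real n * (- a / c) = - (a * real n) / c" by (simp add: mult.commute)
  finally show ?thesis by simp
qed

context perc begin

lemma Nratio_bounds: "n \<ge> 1 \<Longrightarrow> 0 \<le> Nmax X n \<omega> / real n \<and> Nmax X n \<omega> / real n \<le> 1"
  using Nmax_bounds[of X n \<omega>] by auto

lemma sup_tail:
  assumes pp: "0 < p" and lq: "lam * p powr (1 / real CARD('d)) \<le> 1"
    and s: "s \<ge> real (cst k CARD('d)) * lam"
  shows "prob {\<omega> \<in> space M. s * p powr (1 / real CARD('d)) <
            (SUP n\<in>{nat \<lceil>p powr (- 2 / real CARD('d))\<rceil>..}. Nmax X n \<omega> / real n)}
     \<le> exp (- s * p powr (- 1 / real CARD('d)) / real (cst k CARD('d)))
        * (1 + real (cst k CARD('d)) * p powr (- 1 / real CARD('d)))"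
proof -
  define c where "c = real (cst k CARD('d))"
  define q where "q = p powr (1 / real CARD('d))"
  define u where "u = p powr (- 1 / real CARD('d))"
  define n0 where "n0 = nat \<lceil>p powr (- 2 / real CARD('d))\<rceil>"
  define a where "a = s * q"
  define b where "b = exp (- a / c)"
  have c1: "c \<ge> 1" unfolding c_def using cc_pos .
  have q0: "q > 0" unfolding q_def using pp by simp
  have lam1: "lam \<ge> 1" unfolding lam_def
  proof -
    have "(1::real) \<le> exp 2" by simp
    then show "1 \<le> 12 * exp (2::real)" by linarith
  qed
  have s1: "s \<ge> 1" using s c1 lam1 unfolding c_def[symmetric]
    by (metis mult_mono' order.trans mult_1_left zero_le_one)
  have a0: "a > 0" unfolding a_def using s1 q0 by simp
  have b0: "0 < b" "b < 1" unfolding b_def using a0 c1 by auto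
  have n01: "n0 \<ge> 1" and n0ge: "\<And>n. n \<ge> n0 \<Longrightarrow> real n \<ge> p powr (- 2 / real CARD('d))"
    unfolding n0_def using n0_props[OF pp p1 card_pos] by auto
  have uq: "u = 1 / q" unfolding u_def q_def using u_inv[OF pp] .
  define A where "A = (\<lambda>i. {\<omega> \<in> space M. a * real (n0 + i) \<le> Nmax X (n0 + i) \<omega>})"
  have Aev: "\<And>i. A i \<in> events" unfolding A_def by (rule ge_events)
  have sub: "{\<omega> \<in> space M. a < (SUP n\<in>{n0..}. Nmax X n \<omega> / real n)} \<subseteq> (\<Union>i. A i)"
  proof
    fix \<omega> assume "\<omega> \<in> {\<omega> \<in> space M. a < (SUP n\<in>{n0..}. Nmax X n \<omega> / real n)}"
    then have om: "\<omega> \<in> space M" and lt: "a < (SUP n\<in>{n0..}. Nmax X n \<omega> / real n)" by auto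
    have bdd: "bdd_above ((\<lambda>n. Nmax X n \<omega> / real n) ` {n0..})"
    proof (rule bdd_aboveI2)
      fix n assume "n \<in> {n0..}"
      then have "n \<ge> 1" using n01 by simp
      then show "Nmax X n \<omega> / real n \<le> 1" using Nratio_bounds by blast
    qed
    obtain n where n: "n \<in> {n0..}" "a < Nmax X n \<omega> / real n"
      using lt less_cSUP_iff[OF _ bdd] by auto
    have "real n > 0" using n(1) n01 by simp
    then have "a * real n \<le> Nmax X n \<omega>" using n(2) by (simp add: field_simps)
    moreover have "n = n0 + (n - n0)" using n(1) by simp
    ultimately have "\<omega> \<in> A (n - n0)" unfolding A_def using om by (metis (mono_tags, lifting) mem_Collect_eq)
    then show "\<omega> \<in> (\<Union>i. A i)" by blast
  qed
  have PA: "\<And>i. prob (A i) \<le> b ^ n0 * b ^ i"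
  proof -
    fix i
    let ?n = "n0 + i"
    have r0: "0 < a * real ?n" using a0 n01 by simp
    have "c * lam * q * real ?n \<le> a * real ?n" unfolding a_def
      using s q0 by (intro mult_right_mono) (auto simp: c_def mult.commute mult.left_commute)
    then have "prob (A i) \<le> exp (- (a * real ?n) / c)"
      unfolding A_def c_def q_def using TL[OF pp lq r0] by simp
    also have "\<dots> = b ^ ?n" unfolding b_def by (rule exp_pow_div)
    also have "\<dots> = b ^ n0 * b ^ i" by (simp add: power_add)
    finally show "prob (A i) \<le> b ^ n0 * b ^ i" .
  qed
  have sg: "summable (\<lambda>i. b ^ n0 * b ^ i)" using b0 by (intro summable_mult summable_geometric) simp
  have sA: "summable (\<lambda>i. prob (A i))"
    by (rule summable_comparison_test[OF _ sg]) (use PA in auto)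
  have "prob {\<omega> \<in> space M. a < (SUP n\<in>{n0..}. Nmax X n \<omega> / real n)} \<le> prob (\<Union>i. A i)"
    using Aev by (intro finite_measure_mono[OF sub] sets.countable_UN) auto
  also have "\<dots> \<le> (\<Sum>i. prob (A i))" using Aev sA by (intro finite_measure_subadditive_countably) auto
  also have "\<dots> \<le> (\<Sum>i. b ^ n0 * b ^ i)" using PA sA sg by (intro suminf_le) auto
  also have "\<dots> = b ^ n0 * (1 / (1 - b))" using b0 by (simp add: suminf_mult suminf_geometric)
  also have "\<dots> \<le> exp (- s * u / c) * (1 + c * u)"
  proof (rule mult_mono)
    have "s * u \<le> a * real n0"
    proof -
      have "s * u = s * (q * p powr (- 2 / real CARD('d)))" unfolding u_def q_def using u_eq[OF pp] by simp
      also have "\<dots> \<le> s * (q * real n0)" using s1 q0 n0ge[of n0] by (intro mult_left_mono) auto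
      finally show ?thesis unfolding a_def by (simp add: mult.assoc)
    qed
    then have "- (a * real n0) / c \<le> - s * u / c" using c1 by (simp add: divide_right_mono)
    then have "exp (- (a * real n0) / c) \<le> exp (- s * u / c)" by simp
    moreover have "b ^ n0 = exp (- (a * real n0) / c)" unfolding b_def by (rule exp_pow_div[symmetric])
    ultimately show "b ^ n0 \<le> exp (- s * u / c)" by simp
  next
    define y where "y = a / c"
    have y0: "y > 0" unfolding y_def using a0 c1 by simp
    have "1 + y \<le> exp y" by (rule exp_ge_add_one_self)
    then have "1 / exp y \<le> 1 / (1 + y)" using y0 by (intro divide_left_mono) auto
    moreover have "b = 1 / exp y" unfolding b_def y_def by (simp add: exp_minus inverse_eq_divide)
    ultimately have "b \<le> 1 / (1 + y)" by simp
    then have h1: "y / (1 + y) \<le> 1 - b" using y0 by (simp add: field_simps)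
    have yy: "0 < y / (1 + y)" using y0 by simp
    have "1 / (1 - b) \<le> 1 / (y / (1 + y))"
    proof -
      have pos: "0 < (1 - b) * (y / (1 + y))" using b0 yy by (intro mult_pos_pos) auto
      show ?thesis by (rule divide_left_mono[OF h1 _ pos]) simp
    qed
    also have "\<dots> = 1 + c / a" unfolding y_def using a0 c1 by (simp add: field_simps)
    also have "c / a = c * u / s" unfolding a_def uq using s1 q0 by simp
    also have "\<dots> \<le> c * u" using s1 c1 q0 uq by (simp add: divide_le_eq mult_le_cancel_left1)
    finally show "1 / (1 - b) \<le> 1 + c * u" by simp
  qed (use b0 in auto)
  finally show ?thesis unfolding a_def c_def q_def u_def n0_def .
qed

end


lemma real_iii: assumes c: "(c::real) \<ge> 1" and s: "s \<ge> 1" and u: "u \<ge> 1"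
  shows "exp (- s * u / c) * (1 + c * u) \<le> 2 * c ^ 2 * exp (- (1 / (2 * c)) * s)"
proof -
  define v where "v = u / (2 * c)"
  have v0: "v \<ge> 0" unfolding v_def using c u by simp
  have e1: "exp (- s * u / c) = exp (- s * u / (2 * c)) * exp (- s * u / (2 * c))"
    by (simp flip: exp_add)
  have e2: "exp (- s * u / (2 * c)) \<le> exp (- (1 / (2 * c)) * s)"
  proof -
    have "s \<le> s * u" using s u by (metis mult_le_cancel_left1 order_trans zero_le_one mult.commute less_le_not_le)
    then have "- s * u / (2 * c) \<le> - (1 / (2 * c)) * s" using c by (simp add: divide_right_mono)
    then show ?thesis by simp
  qed
  have e3: "exp (- s * u / (2 * c)) \<le> exp (- v)"
  proof -
    have "u \<le> s * u" using s u by (simp add: mult_le_cancel_right1)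
    then have "- s * u / (2 * c) \<le> - v" unfolding v_def using c by (simp add: divide_right_mono)
    then show ?thesis by simp
  qed
  have e4: "exp (- v) * (1 + c * u) \<le> 2 * c ^ 2"
  proof -
    have "1 + c * u = 1 + 2 * c ^ 2 * v" unfolding v_def using c by (simp add: power2_eq_square field_simps)
    also have "\<dots> \<le> 2 * c ^ 2 * (1 + v)" using c v0
    proof -
      have "1 \<le> 2 * c ^ 2" using c by (metis one_le_power dual_order.trans le_add_same_cancel2 mult_2 zero_le_one)
      then show ?thesis by (simp add: algebra_simps)
    qed
    also have "\<dots> \<le> 2 * c ^ 2 * exp v" by (intro mult_left_mono exp_ge_add_one_self) simp
    finally have "1 + c * u \<le> 2 * c ^ 2 * exp v" .
    then have "exp (- v) * (1 + c * u) \<le> exp (- v) * (2 * c ^ 2 * exp v)" by (intro mult_left_mono) auto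
    also have "\<dots> = 2 * c ^ 2" by (simp add: exp_minus field_simps)
    finally show ?thesis .
  qed
  have "exp (- s * u / c) * (1 + c * u) = exp (- s * u / (2 * c)) * (exp (- s * u / (2 * c)) * (1 + c * u))"
    unfolding e1 by simp
  also have "\<dots> \<le> exp (- (1 / (2 * c)) * s) * (exp (- v) * (1 + c * u))"
    using e2 e3 c u by (intro mult_mono) auto
  also have "\<dots> \<le> exp (- (1 / (2 * c)) * s) * (2 * c ^ 2)" using e4 by (intro mult_left_mono) auto
  finally show ?thesis by (simp only: mult.commute[of "2 * c ^ 2"])
qed

lemma real_ii: assumes c: "(c::real) \<ge> 1" and u: "u \<ge> 1" and l: "l \<ge> 1"
  shows "exp (- (c * l) * u / c) * (1 + c * u) \<le> 4 * (1 + c) * (1 / u)"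
proof -
  have "exp (- (c * l) * u / c) = exp (- l * u)" using c by simp
  also have "\<dots> \<le> exp (- u)" using l u by (simp add: mult_le_cancel_right1)
  finally have e: "exp (- (c * l) * u / c) \<le> exp (- u)" .
  have "1 + c * u \<le> (1 + c) * u" using u c by (simp add: algebra_simps)
  then have "exp (- (c * l) * u / c) * (1 + c * u) \<le> exp (- u) * ((1 + c) * u)"
    using e c u by (intro mult_mono) auto
  also have "\<dots> = (1 + c) * (u ^ 2 * exp (- u)) * (1 / u)" using u by (simp add: power2_eq_square field_simps)
  also have "\<dots> \<le> (1 + c) * 4 * (1 / u)"
  proof -
    have "u ^ 2 \<le> 4 * exp u" using u by (intro exp_sq) simp
    then have "u ^ 2 * exp (- u) \<le> 4 * exp u * exp (- u)" by (intro mult_right_mono) auto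
    also have "\<dots> = 4" by (simp add: exp_minus)
    finally show ?thesis using c u by (intro mult_right_mono mult_left_mono) auto
  qed
  finally show ?thesis by (simp only: mult.commute[of "1 + c" 4])
qed

context perc begin

lemma Z_props:
  assumes pp: "0 < p"
  defines "Z \<equiv> \<lambda>\<omega>. SUP n\<in>{nat \<lceil>p powr (- 2 / real CARD('d))\<rceil>..}. Nmax X n \<omega> / real n"
  shows "\<And>\<omega>. 0 \<le> Z \<omega> \<and> Z \<omega> \<le> 1" and "Z \<in> borel_measurable M"
proof -
  define n0 where "n0 = nat \<lceil>p powr (- 2 / real CARD('d))\<rceil>"
  have n01: "n0 \<ge> 1" unfolding n0_def using n0_props[OF pp p1 card_pos] by auto
  have le1: "\<And>\<omega> n. n \<in> {n0..} \<Longrightarrow> Nmax X n \<omega> / real n \<le> 1" using n01 Nratio_bounds by auto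
  have bdd: "\<And>\<omega>. bdd_above ((\<lambda>n. Nmax X n \<omega> / real n) ` {n0..})"
    using le1 by (intro bdd_aboveI2) auto
  fix \<omega>
  have "Z \<omega> \<le> 1" unfolding Z_def n0_def[symmetric] using le1 by (intro cSUP_least) auto
  moreover have "0 \<le> Z \<omega>"
  proof -
    have "0 \<le> Nmax X n0 \<omega> / real n0" using Nratio_bounds n01 by blast
    also have "\<dots> \<le> Z \<omega>" unfolding Z_def n0_def[symmetric] by (intro cSUP_upper bdd) simp
    finally show ?thesis .
  qed
  ultimately show "0 \<le> Z \<omega> \<and> Z \<omega> \<le> 1" by simp
next
  define n0 where "n0 = nat \<lceil>p powr (- 2 / real CARD('d))\<rceil>"
  have n01: "n0 \<ge> 1" unfolding n0_def using n0_props[OF pp p1 card_pos] by auto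
  have le1: "\<And>\<omega> n. n \<in> {n0..} \<Longrightarrow> Nmax X n \<omega> / real n \<le> 1" using n01 Nratio_bounds by auto
  show "Z \<in> borel_measurable M" unfolding Z_def n0_def[symmetric]
  proof (rule borel_measurable_cSUP)
    show "countable {n0..}" by (rule countableI_type)
    fix n show "(\<lambda>\<omega>. Nmax X n \<omega> / real n) \<in> borel_measurable M"
      by (intro borel_measurable_divide Nmax_meas borel_measurable_const)
  next
    fix \<omega> show "bdd_above ((\<lambda>n. Nmax X n \<omega> / real n) ` {n0..})"
      using le1 by (intro bdd_aboveI2) auto
  qed
qed

end


context perc begin

lemma qq_le1: "p powr (1 / real CARD('d)) \<le> 1"
  using p0 p1 by (intro powr_le1) auto

lemma u_ge1: assumes "0 < p" shows "p powr (- 1 / real CARD('d)) \<ge> 1"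
proof -
  have q: "0 < p powr (1 / real CARD('d))" "p powr (1 / real CARD('d)) \<le> 1" using assms qq_le1 by auto
  then have "1 \<le> 1 / p powr (1 / real CARD('d))" by simp
  then show ?thesis using u_inv[OF assms] by simp
qed

lemma lam_ge1: "lam \<ge> 1"
proof -
  have "(1::real) \<le> exp 2" by simp
  then show ?thesis unfolding lam_def by linarith
qed

lemma part_iii:
  assumes pp: "0 < p" and s: "s > real (cst k CARD('d)) * (12 * exp 2)"
  shows "measure M {\<omega> \<in> space M.
          (SUP n\<in>{nat \<lceil>p powr (- 2 / real CARD('d))\<rceil>..}. Nmax X n \<omega> / real n) > s * p powr (1 / real CARD('d))}
        \<le> 2 * (real (cst k CARD('d))) ^ 2 * exp (- (1 / (2 * real (cst k CARD('d)))) * s)"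
proof -
  define c where "c = real (cst k CARD('d))"
  have c1: "c \<ge> 1" unfolding c_def using cc_pos .
  have s': "s \<ge> c * lam" using s unfolding c_def lam_def by simp
  have s1: "s \<ge> 1" using s' c1 lam_ge1 by (metis mult_mono' order.trans mult_1_left zero_le_one)
  have u1: "p powr (- 1 / real CARD('d)) \<ge> 1" by (rule u_ge1[OF pp])
  show ?thesis
  proof (cases "lam * p powr (1 / real CARD('d)) \<le> 1")
    case True
    have "measure M {\<omega> \<in> space M.
          (SUP n\<in>{nat \<lceil>p powr (- 2 / real CARD('d))\<rceil>..}. Nmax X n \<omega> / real n) > s * p powr (1 / real CARD('d))}
        \<le> exp (- s * p powr (- 1 / real CARD('d)) / c) * (1 + c * p powr (- 1 / real CARD('d)))"
      using sup_tail[OF pp True] s' unfolding c_def by simp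
    also have "\<dots> \<le> 2 * c ^ 2 * exp (- (1 / (2 * c)) * s)" by (rule real_iii[OF c1 s1 u1])
    finally show ?thesis unfolding c_def .
  next
    case False
    have E: "{\<omega> \<in> space M.
          (SUP n\<in>{nat \<lceil>p powr (- 2 / real CARD('d))\<rceil>..}. Nmax X n \<omega> / real n) > s * p powr (1 / real CARD('d))} = {}"
    proof -
      have q0: "0 \<le> p powr (1 / real CARD('d))" by simp
      have "lam * p powr (1 / real CARD('d)) \<le> c * lam * p powr (1 / real CARD('d))"
        using mult_right_mono[OF c1, of "lam * p powr (1 / real CARD('d))"] lam_ge1 q0 by (simp add: mult.assoc)
      also have "\<dots> \<le> s * p powr (1 / real CARD('d))" using s' q0 by (intro mult_right_mono) auto
      finally have "1 < s * p powr (1 / real CARD('d))" using False by simp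
      then have "\<And>\<omega>. \<not> (SUP n\<in>{nat \<lceil>p powr (- 2 / real CARD('d))\<rceil>..}. Nmax X n \<omega> / real n) > s * p powr (1 / real CARD('d))"
        using Z_props(1)[OF pp] by (meson le_less_trans not_less_iff_gr_or_eq)
      then show ?thesis by blast
    qed
    have "measure M {\<omega> \<in> space M.
          (SUP n\<in>{nat \<lceil>p powr (- 2 / real CARD('d))\<rceil>..}. Nmax X n \<omega> / real n) > s * p powr (1 / real CARD('d))} = 0"
      by (simp only: E measure_empty)
    then show ?thesis by simp
  qed
qed

lemma part_ii:
  assumes pp: "0 < p"
  shows "expectation (\<lambda>\<omega>. SUP n\<in>{nat \<lceil>p powr (- 2 / real CARD('d))\<rceil>..}. Nmax X n \<omega> / real n)
     \<le> C1c (real (cst k CARD('d))) * p powr (1 / real CARD('d))"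
proof -
  define c where "c = real (cst k CARD('d))"
  define q where "q = p powr (1 / real CARD('d))"
  define u where "u = p powr (- 1 / real CARD('d))"
  define Z where "Z = (\<lambda>\<omega>. SUP n\<in>{nat \<lceil>p powr (- 2 / real CARD('d))\<rceil>..}. Nmax X n \<omega> / real n)"
  have c1: "c \<ge> 1" unfolding c_def using cc_pos .
  have q0: "0 < q" unfolding q_def using pp by simp
  have u1: "u \<ge> 1" unfolding u_def by (rule u_ge1[OF pp])
  have uq: "1 / u = q" unfolding u_def q_def using u_inv[OF pp] by simp
  have Zb: "\<And>\<omega>. 0 \<le> Z \<omega> \<and> Z \<omega> \<le> 1" unfolding Z_def using Z_props(1)[OF pp] by blast
  have Zm: "Z \<in> borel_measurable M" unfolding Z_def using Z_props(2)[OF pp] by blast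
  have Zi: "integrable M Z"
    by (rule integrable_const_bound[where B=1]) (use Zb Zm in auto)
  have G0: "Gc c > 0" using c1 Gc_pos by simp
  have C1ge: "c * lam + 4 * (1 + c) \<le> C1c c" "lam \<le> C1c c"
    unfolding C1c_def lam_def using c1 G0 by auto
  have "expectation Z \<le> C1c c * q"
  proof (cases "lam * q \<le> 1")
    case False
    have "expectation Z \<le> expectation (\<lambda>_. 1::real)"
      using Zi Zb by (intro integral_mono) auto
    also have "\<dots> = 1" by (simp add: prob_space)
    also have "\<dots> \<le> lam * q" using False by simp
    also have "\<dots> \<le> C1c c * q" using C1ge(2) q0 by (intro mult_right_mono) auto
    finally show ?thesis .
  next
    case True
    define a where "a = c * lam * q"
    have a0: "a \<ge> 0" unfolding a_def using c1 lam_ge1 q0 by simp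
    define S where "S = {\<omega> \<in> space M. a < Z \<omega>}"
    have Sev: "S \<in> events"
    proof -
      have "S = Z -` {a<..} \<inter> space M" unfolding S_def by auto
      then show ?thesis using measurable_sets[OF Zm, of "{a<..}"] by simp
    qed
    have "expectation Z \<le> expectation (\<lambda>\<omega>. a + indicator S \<omega>)"
    proof (rule integral_mono)
      show "integrable M Z" by (rule Zi)
      show "integrable M (\<lambda>\<omega>. a + indicator S \<omega>)"
        using Sev by (intro Bochner_Integration.integrable_add integrable_const integrable_real_indicator)
          (auto simp: less_top[symmetric])
      fix \<omega> assume om: "\<omega> \<in> space M"
      show "Z \<omega> \<le> a + indicator S \<omega>"
      proof (cases "a < Z \<omega>")
        case True then have "\<omega> \<in> S" unfolding S_def using om by simp
        then show ?thesis using Zb[of \<omega>] a0 by simp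
      next
        case False then show ?thesis by (simp add: indicator_def)
      qed
    qed
    also have "\<dots> = a + prob S"
      using Sev by (subst Bochner_Integration.integral_add) (auto simp: prob_space less_top[symmetric])
    also have "prob S \<le> exp (- (c * lam) * u / c) * (1 + c * u)"
      unfolding S_def a_def Z_def c_def q_def u_def
      using sup_tail[OF pp True[unfolded q_def], of "real (cst k CARD('d)) * lam"] by simp
    also have "\<dots> \<le> 4 * (1 + c) * (1 / u)" by (rule real_ii[OF c1 u1 lam_ge1])
    also have "a + 4 * (1 + c) * (1 / u) = (c * lam + 4 * (1 + c)) * q" unfolding a_def uq by (simp add: algebra_simps)
    also have "\<dots> \<le> C1c c * q" using C1ge(1) q0 by (intro mult_right_mono) auto
    finally show ?thesis by simp
  qed
  then show ?thesis unfolding Z_def c_def q_def .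
qed

end

theorem lemmaB1:
  fixes k :: nat
  assumes "CARD('d::finite) \<ge> 2"
  shows "\<exists>C1 C2 C3 C4 :: real. C1 > 0 \<and> C2 > 0 \<and> C3 > 0 \<and> C4 > 0 \<and>
    (\<forall>(M :: ('d edge \<Rightarrow> bool) measure) (X :: 'd edge \<Rightarrow> ('d edge \<Rightarrow> bool) \<Rightarrow> bool) (p :: real).
      prob_space M \<and> 0 \<le> p \<and> p \<le> 1 \<and>
      (\<forall>e\<in>nn_edges. X e \<in> measurable M (count_space UNIV)) \<and>
      (\<forall>e\<in>nn_edges. measure M {\<omega> \<in> space M. X e \<omega>} = p) \<and>
      (\<forall>e\<in>nn_edges. prob_space.indep_set M
          {X e -` A \<inter> space M | A. A \<in> sets (count_space UNIV)}
          {(\<lambda>\<omega>. \<lambda>e'\<in>far_edges k e. X e' \<omega>) -` A \<inter> space M | A.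
             A \<in> sets (PiM (far_edges k e) (\<lambda>_. count_space UNIV))})
      \<longrightarrow>
      (\<forall>n. prob_space.expectation M (Nmax X n) \<le> C1 * p powr (1 / CARD('d)) * real n) \<and>
      (0 < p \<longrightarrow>
        prob_space.expectation M
          (\<lambda>\<omega>. SUP n\<in>{nat \<lceil>p powr (- 2 / CARD('d))\<rceil>..}. Nmax X n \<omega> / real n)
        \<le> C1 * p powr (1 / CARD('d))) \<and>
      (0 < p \<and> p < 1 \<longrightarrow> (\<forall>s > C2.
        measure M {\<omega> \<in> space M.
          (SUP n\<in>{nat \<lceil>p powr (- 2 / CARD('d))\<rceil>..}. Nmax X n \<omega> / real n) > s * p powr (1 / CARD('d))}
        \<le> C3 * exp (- C4 * s))))"
proof -
  define c where "c = real (cst k CARD('d))"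
  have c1: "c \<ge> 1" unfolding c_def using cst_pos[of k "CARD('d)"] by simp
  have pos: "C1c c > 0" "c * (12 * exp 2) > 0" "2 * c ^ 2 > 0" "1 / (2 * c) > 0"
  proof -
    have "Gc c > 0" using c1 Gc_pos by simp
    then show "C1c c > 0" unfolding C1c_def using c1 by (simp add: add_pos_nonneg)
  qed (use c1 in auto)
  have main: "\<forall>(M :: ('d edge \<Rightarrow> bool) measure) (X :: 'd edge \<Rightarrow> ('d edge \<Rightarrow> bool) \<Rightarrow> bool) (p :: real).
      prob_space M \<and> 0 \<le> p \<and> p \<le> 1 \<and>
      (\<forall>e\<in>nn_edges. X e \<in> measurable M (count_space UNIV)) \<and>
      (\<forall>e\<in>nn_edges. measure M {\<omega> \<in> space M. X e \<omega>} = p) \<and>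
      (\<forall>e\<in>nn_edges. prob_space.indep_set M
          {X e -` A \<inter> space M | A. A \<in> sets (count_space UNIV)}
          {(\<lambda>\<omega>. \<lambda>e'\<in>far_edges k e. X e' \<omega>) -` A \<inter> space M | A.
             A \<in> sets (PiM (far_edges k e) (\<lambda>_. count_space UNIV))})
      \<longrightarrow>
      (\<forall>n. prob_space.expectation M (Nmax X n) \<le> C1c c * p powr (1 / CARD('d)) * real n) \<and>
      (0 < p \<longrightarrow>
        prob_space.expectation M
          (\<lambda>\<omega>. SUP n\<in>{nat \<lceil>p powr (- 2 / CARD('d))\<rceil>..}. Nmax X n \<omega> / real n)
        \<le> C1c c * p powr (1 / CARD('d))) \<and>
      (0 < p \<and> p < 1 \<longrightarrow> (\<forall>s > c * (12 * exp 2).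
        measure M {\<omega> \<in> space M.
          (SUP n\<in>{nat \<lceil>p powr (- 2 / CARD('d))\<rceil>..}. Nmax X n \<omega> / real n) > s * p powr (1 / CARD('d))}
        \<le> 2 * c ^ 2 * exp (- (1 / (2 * c)) * s)))"
  proof (intro allI impI)
    fix M :: "('d edge \<Rightarrow> bool) measure" and X :: "'d edge \<Rightarrow> ('d edge \<Rightarrow> bool) \<Rightarrow> bool" and p :: real
    assume H: "prob_space M \<and> 0 \<le> p \<and> p \<le> 1 \<and>
      (\<forall>e\<in>nn_edges. X e \<in> measurable M (count_space UNIV)) \<and>
      (\<forall>e\<in>nn_edges. measure M {\<omega> \<in> space M. X e \<omega>} = p) \<and>
      (\<forall>e\<in>nn_edges. prob_space.indep_set M
          {X e -` A \<inter> space M | A. A \<in> sets (count_space UNIV)}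
          {(\<lambda>\<omega>. \<lambda>e'\<in>far_edges k e. X e' \<omega>) -` A \<inter> space M | A.
             A \<in> sets (PiM (far_edges k e) (\<lambda>_. count_space UNIV))})"
    have "perc M X p k" unfolding perc_def perc_axioms_def using H by blast
    then interpret P: perc M X p k .
    show "(\<forall>n. prob_space.expectation M (Nmax X n) \<le> C1c c * p powr (1 / CARD('d)) * real n) \<and>
      (0 < p \<longrightarrow>
        prob_space.expectation M
          (\<lambda>\<omega>. SUP n\<in>{nat \<lceil>p powr (- 2 / CARD('d))\<rceil>..}. Nmax X n \<omega> / real n)
        \<le> C1c c * p powr (1 / CARD('d))) \<and>
      (0 < p \<and> p < 1 \<longrightarrow> (\<forall>s > c * (12 * exp 2).
        measure M {\<omega> \<in> space M.
          (SUP n\<in>{nat \<lceil>p powr (- 2 / CARD('d))\<rceil>..}. Nmax X n \<omega> / real n) > s * p powr (1 / CARD('d))}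
        \<le> 2 * c ^ 2 * exp (- (1 / (2 * c)) * s)))"
      unfolding c_def using P.part_i P.part_ii P.part_iii by blast
  qed
  show ?thesis
    apply (rule exI[of _ "C1c c"])
    apply (rule exI[of _ "c * (12 * exp 2)"])
    apply (rule exI[of _ "2 * c ^ 2"])
    apply (rule exI[of _ "1 / (2 * c)"])
    using pos main by (intro conjI) (simp_all only:)
qed


end
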